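(* Let $n\ge 1$ and $k=n^{1/6}$ (assumed to be an integer power of $2$). Consider the GHZ-type correlation problem on $n$ parties with inputs $x\in\{0,\ldots,k-1\}^n$, let $D=\{x:\ (\sum_{i=1}^n x_i)\bmod k=0\}$ be the set of valid inputs, and let $\mu$ be the uniform distribution on $D$. For $x\in D$ let $F(x)=\frac{1}{k}\big[(\sum_{i=1}^n x_i)\bmod 2k\big]\in\{0,1\}$, and let the target correlations be $P(a|x)=2^{-(n-1)}$ if $a_1+\cdots+a_n\equiv F(x)\pmod 2$ and $P(a|x)=0$ otherwise, for $a\in\{0,1\}^n$, $x\in D$. Then for every classical model with shared randomness in which $c$ bits are broadcast, with detection efficiency $\eta$ and error probability $\epsilon$ (as defined in the context), one has \[ \frac{1}{2^{c/n}}\,\eta\,\Big(1-\epsilon\Big[2+O\big(n^{-1/6}\big)\Big]\Big)^{1/n}=O\big(n^{-1/6}\big), \] where the $O$-terms refer to $n\to\infty$ and are uniform over all such models.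
   Context: Classical models with communication: a deterministic model is a rooted protocol tree; each internal node $u$ is labeled by a party $i_u$ who broadcasts which child to go to, according to a partition of party $i_u$'s input set among the edges leaving $u$; each leaf $v$ is labeled by local output functions $\lambda_{v,i}$ mapping party $i$'s input $x_i$ to an output in $\{0,1\}\cup\{\perp\}$, where $\perp$ means "detector did not click". On input $x$ the execution follows the tree to a leaf $v$ and party $i$ outputs $\lambda_{v,i}(x_i)$. The number of bits broadcast is $c=\sum\lceil\log t_j\rceil$ over the numbers $t_j$ of children of the nodes on the path taken (with $c$ the maximum over paths). A classical model with shared randomness is a probability distribution over deterministic models; it induces a conditional output distribution $Q(a|x)$ on $a\in(\{0,1\}\cup\{\perp\})^n$. Let $C$ denote the event (and its indicator) that $a_i\neq\perp$ for all $i$. The detection efficiency is $\eta=\big(\mathbb E_{x\sim\mu}[\sum_a Q(a|x)\,C]\big)^{1/n}$. With $F'$ the indicator of $P(a|x)=0$ (for the target $P$), the error probability is $\epsilon=\mathbb E_{x\sim\mu}\big[\sum_a Q(a|x)\,F'\,C/\eta^n\big]$. *)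

theory Defs
  imports "HOL-Probability.Probability" "HOL-Library.Landau_Symbols"
begin

text \<open>Parties are indexed 0..n-1, inputs are functions x :: nat => nat with x i < k
  for i < n (and x i = 0 for i >= n, so that the input set is finite).
  Outputs are bool option: None is the no-click symbol, Some False / Some True are 0 / 1.\<close>

text \<open>A leaf carries the local output functions
  (party i, its own input x_i) -> output. An internal node carries the speaking party,
  a function mapping that party's input to the index of the child (the partition of
  its input set among the edges), and the list of children.\<close>
datatype ptree =
    Leaf "nat \<Rightarrow> nat \<Rightarrow> bool option"
  | Node nat "nat \<Rightarrow> nat" "ptree list"

primrec run :: "ptree \<Rightarrow> (nat \<Rightarrow> nat) \<Rightarrow> nat \<Rightarrow> bool option" where
  "run (Leaf lam) = (\<lambda>x i. lam i (x i))"
| "run (Node p f ts) = (\<lambda>x. (map run ts ! f (x p)) x)"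

primrec bits :: "ptree \<Rightarrow> nat" where
  "bits (Leaf lam) = 0"
| "bits (Node p f ts) = nat \<lceil>log 2 (real (length ts))\<rceil> + Max (set (0 # map bits ts))"

primrec wf_tree :: "nat \<Rightarrow> nat \<Rightarrow> ptree \<Rightarrow> bool" where
  "wf_tree n k (Leaf lam) = True"
| "wf_tree n k (Node p f ts) =
     (p < n \<and> ts \<noteq> [] \<and> (\<forall>v<k. f v < length ts) \<and> list_all (wf_tree n k) ts)"

text \<open>A classical model with shared randomness: a probability distribution over
  deterministic models, each broadcasting at most c bits.\<close>
definition valid_model :: "nat \<Rightarrow> nat \<Rightarrow> nat \<Rightarrow> ptree pmf \<Rightarrow> bool" where
  "valid_model n k c M = (\<forall>T\<in>set_pmf M. wf_tree n k T \<and> bits T \<le> c)"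

definition inputs :: "nat \<Rightarrow> nat \<Rightarrow> (nat \<Rightarrow> nat) set" where
  "inputs n k = {x. (\<forall>i<n. x i < k) \<and> (\<forall>i\<ge>n. x i = 0)}"

definition validD :: "nat \<Rightarrow> nat \<Rightarrow> (nat \<Rightarrow> nat) set" where
  "validD n k = {x \<in> inputs n k. (\<Sum>i<n. x i) mod k = 0}"

definition ghzF :: "nat \<Rightarrow> nat \<Rightarrow> (nat \<Rightarrow> nat) \<Rightarrow> nat" where
  "ghzF n k x = ((\<Sum>i<n. x i) mod (2 * k)) div k"

text \<open>Target correlations P(a|x) for a in {0,1}^n (a i = True means a_i = 1).\<close>
definition ghzP :: "nat \<Rightarrow> nat \<Rightarrow> (nat \<Rightarrow> bool) \<Rightarrow> (nat \<Rightarrow> nat) \<Rightarrow> real" where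
  "ghzP n k a x = (if (card {i. i < n \<and> a i}) mod 2 = ghzF n k x mod 2
                   then 1 / 2 ^ (n - 1) else 0)"

definition clicks :: "nat \<Rightarrow> ptree \<Rightarrow> (nat \<Rightarrow> nat) \<Rightarrow> bool" where
  "clicks n T x = (\<forall>i<n. run T x i \<noteq> None)"

definition eta :: "nat \<Rightarrow> nat \<Rightarrow> ptree pmf \<Rightarrow> real" where
  "eta n k M = root n ((\<Sum>x\<in>validD n k. measure_pmf.prob M {T. clicks n T x})
                       / real (card (validD n k)))"

definition eps :: "nat \<Rightarrow> nat \<Rightarrow> ptree pmf \<Rightarrow> real" where
  "eps n k M = (\<Sum>x\<in>validD n k.
       measure_pmf.prob M {T. clicks n T x \<and> ghzP n k (\<lambda>i. run T x i = Some True) x = 0}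
         / eta n k M ^ n) / real (card (validD n k))"

end

theory Submission
  imports Defs
begin

definition rect :: "nat \<Rightarrow> (nat \<Rightarrow> nat set) \<Rightarrow> (nat \<Rightarrow> nat) set" where
  "rect m A = {x. (\<forall>i<m. x i \<in> A i) \<and> (\<forall>i\<ge>m. x i = 0)}"

lemma rect_0: "rect 0 A = {\<lambda>_. 0}"
  by (auto simp: rect_def)

lemma rect_Suc: "rect (Suc m) A = (\<lambda>(u,x). x(m:=u)) ` (A m \<times> rect m A)"
proof
  show "rect (Suc m) A \<subseteq> (\<lambda>(u,x). x(m:=u)) ` (A m \<times> rect m A)"
  proof
    fix x assume x: "x \<in> rect (Suc m) A"
    have "x = (\<lambda>(u,x). x(m:=u)) (x m, x(m:=0))" by auto
    moreover have "(x m, x(m:=0)) \<in> A m \<times> rect m A"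
      using x by (auto simp: rect_def less_Suc_eq)
    ultimately show "x \<in> (\<lambda>(u,x). x(m:=u)) ` (A m \<times> rect m A)" by blast
  qed
  show "(\<lambda>(u,x). x(m:=u)) ` (A m \<times> rect m A) \<subseteq> rect (Suc m) A"
    by (auto simp: rect_def less_Suc_eq)
qed

lemma inj_rect: "inj_on (\<lambda>(u,x). x(m:=u)) (A m \<times> rect m A)"
proof (rule inj_onI, clarify)
  fix u x u' x'
  assume x: "x \<in> rect m A" and x': "x' \<in> rect m A" and eq: "x(m := u) = x'(m := u')"
  have "u = u'" using fun_cong[OF eq, of m] by simp
  moreover have "x = x'"
  proof
    fix i show "x i = x' i"
      using fun_cong[OF eq, of i] x x' by (cases "i = m") (auto simp: rect_def)
  qed
  ultimately show "u = u' \<and> x = x'" by simp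
qed

lemma finite_rect: "(\<forall>i<m. finite (A i)) \<Longrightarrow> finite (rect m A)"
  by (induction m) (auto simp: rect_0 rect_Suc)

lemma sum_rect_Suc:
  assumes "\<forall>i<Suc m. finite (A i)"
  shows "(\<Sum>x\<in>rect (Suc m) A. h x) = (\<Sum>u\<in>A m. \<Sum>x\<in>rect m A. h (x(m:=u)))"
proof -
  have "(\<Sum>x\<in>rect (Suc m) A. h x) = (\<Sum>p\<in>A m \<times> rect m A. h ((\<lambda>(u,x). x(m:=u)) p))"
    unfolding rect_Suc by (rule sum.reindex[OF inj_rect, unfolded comp_def])
  also have "\<dots> = (\<Sum>u\<in>A m. \<Sum>x\<in>rect m A. h (x(m:=u)))"
    by (simp add: sum.cartesian_product case_prod_unfold)
  finally show ?thesis .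
qed

lemma card_rect: "(\<forall>i<m. finite (A i)) \<Longrightarrow> card (rect m A) = (\<Prod>i<m. card (A i))"
proof (induction m)
  case 0 then show ?case by (simp add: rect_0)
next
  case (Suc m)
  have "card (rect (Suc m) A) = card (A m \<times> rect m A)"
    unfolding rect_Suc by (rule card_image[OF inj_rect])
  then show ?case using Suc by (simp add: card_cartesian_product)
qed

definition yv :: "nat \<Rightarrow> (nat \<Rightarrow> nat \<Rightarrow> bool) \<Rightarrow> nat \<Rightarrow> nat \<Rightarrow> nat" where
  "yv k b i u = u + (if b i u then k else 0)"

definition cnt :: "nat \<Rightarrow> (nat \<Rightarrow> nat \<Rightarrow> bool) \<Rightarrow> nat \<Rightarrow> (nat \<Rightarrow> nat set) \<Rightarrow> nat \<Rightarrow> real" where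
  "cnt k b m A S = (\<Sum>x\<in>rect m A. if (S + (\<Sum>i<m. yv k b i (x i))) mod (2*k) = 0 then 1 else 0)"

definition Wt :: "nat \<Rightarrow> (nat \<Rightarrow> nat \<Rightarrow> bool) \<Rightarrow> real \<Rightarrow> nat \<Rightarrow> (nat \<Rightarrow> nat set) \<Rightarrow> nat \<Rightarrow> real" where
  "Wt k b g m A S = cnt k b m A S - (1+g) * cnt k b m A (S + k)"

lemma cnt_nonneg: "0 \<le> cnt k b m A S"
  unfolding cnt_def by (rule sum_nonneg) auto

lemma cnt_le_card: "(\<forall>i<m. finite (A i)) \<Longrightarrow> cnt k b m A S \<le> real (card (rect m A))"
  unfolding cnt_def
  using sum_bounded_above[of "rect m A" "\<lambda>x. if (S + (\<Sum>i<m. yv k b i (x i))) mod (2*k) = 0 then 1 else (0::real)" 1]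
  by auto

lemma rect_split:
  assumes "i < m" "A i = P \<union> R"
  shows "rect m A = rect m (A(i:=P)) \<union> rect m (A(i:=R))"
proof (intro equalityI subsetI)
  fix x assume x: "x \<in> rect m A"
  then have "x i \<in> P \<or> x i \<in> R" using assms by (auto simp: rect_def)
  then show "x \<in> rect m (A(i:=P)) \<union> rect m (A(i:=R))" using x by (auto simp: rect_def)
next
  fix x assume "x \<in> rect m (A(i:=P)) \<union> rect m (A(i:=R))"
  then show "x \<in> rect m A" using assms by (auto simp: rect_def split: if_splits)
qed

lemma rect_split_disj:
  assumes "i < m" "P \<inter> R = {}"
  shows "rect m (A(i:=P)) \<inter> rect m (A(i:=R)) = {}"
  using assms by (auto simp: rect_def)

lemma cnt_split:
  assumes "\<forall>i<m. finite (A i)" "i < m" "A i = P \<union> R" "P \<inter> R = {}"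
  shows "cnt k b m A S = cnt k b m (A(i:=P)) S + cnt k b m (A(i:=R)) S"
proof -
  have fP: "finite (rect m (A(i:=P)))" using assms by (intro finite_rect) auto
  have fR: "finite (rect m (A(i:=R)))" using assms by (intro finite_rect) auto
  show ?thesis unfolding cnt_def
    using sum.union_disjoint[OF fP fR rect_split_disj[OF assms(2,4)]] rect_split[of i m A P R, OF assms(2,3)]
    by simp
qed

lemma Wt_split:
  assumes "\<forall>i<m. finite (A i)" "i < m" "A i = P \<union> R" "P \<inter> R = {}"
  shows "Wt k b g m A S = Wt k b g m (A(i:=P)) S + Wt k b g m (A(i:=R)) S"
  using cnt_split[OF assms, of k b S] cnt_split[OF assms, of k b "S+k"]
  unfolding Wt_def by (simp add: algebra_simps)

lemma rect_empty: "i < m \<Longrightarrow> A i = {} \<Longrightarrow> rect m A = {}"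
  by (auto simp: rect_def)

lemma Wt_empty: "i < m \<Longrightarrow> A i = {} \<Longrightarrow> Wt k b g m A S = 0"
  by (simp add: Wt_def cnt_def rect_empty)

definition om :: "nat \<Rightarrow> nat \<Rightarrow> nat \<Rightarrow> complex" where
  "om k j y = cis (pi * real j * real y / real k)"

definition Pf :: "nat \<Rightarrow> (nat \<Rightarrow> nat \<Rightarrow> bool) \<Rightarrow> (nat \<Rightarrow> nat set) \<Rightarrow> nat \<Rightarrow> nat \<Rightarrow> complex" where
  "Pf k b A i j = (\<Sum>u\<in>A i. om k j (yv k b i u))"

lemma om_add: "om k j (a + c) = om k j a * om k j c"
  unfolding om_def cis_mult by (simp add: algebra_simps add_divide_distrib)

lemma roots_sum:
  assumes "k > 0"
  shows "(\<Sum>j<2*k. om k j S) = (if S mod (2*k) = 0 then of_nat (2*k) else 0)"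
proof -
  define z where "z = cis (pi * real S / real k)"
  have om: "om k j S = z ^ j" for j
  proof -
    have "pi * real j * real S / real k = real j * (pi * real S / real k)" by simp
    then show ?thesis unfolding z_def om_def Complex.DeMoivre by metis
  qed
  have zpow: "z ^ (2*k) = 1"
  proof -
    have e: "real (2*k) * (pi * real S / real k) = 2 * pi * real S" using assms by (simp add: field_simps)
    have "z ^ (2*k) = cis (2 * pi * real S)"
      unfolding z_def Complex.DeMoivre e ..
    also have "\<dots> = 1" by (rule cis_multiple_2pi) simp
    finally show ?thesis .
  qed
  show ?thesis
  proof (cases "S mod (2*k) = 0")
    case True
    then obtain q where q: "S = 2*k*q" by auto
    have e: "pi * real S / real k = 2 * pi * real q" unfolding q using assms by (simp add: field_simps)
    have "z = 1" unfolding z_def e by (rule cis_multiple_2pi) simp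
    then show ?thesis using True by (simp add: om)
  next
    case False
    have "z \<noteq> 1"
    proof
      assume "z = 1"
      then have "Re z = 1" by simp
      then have "cos (pi * real S / real k) = 1" unfolding z_def by simp
      then obtain n :: int where n: "pi * real S / real k = of_int n * 2 * pi"
        using cos_one_2pi_int by blast
      have kpos: "real k > 0" using assms by simp
      have "real S = (pi * real S / real k) * real k / pi" using kpos by simp
      also have "\<dots> = of_int n * 2 * real k" unfolding n by simp
      finally have "real_of_int (int S) = real_of_int (n * 2 * int k)" by simp
      then have "int S = n * 2 * int k" by (simp only: of_int_eq_iff)
      then have "int (2*k) dvd int S" by (simp add: algebra_simps)
      then have "2*k dvd S" by (simp only: of_nat_dvd_iff)
      with False show False by auto
    qed
    have "(\<Sum>j<2*k. om k j S) = (\<Sum>j<2*k. z ^ j)" by (simp add: om)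
    also have "\<dots> = (1 - z ^ (2*k)) / (1 - z)" using \<open>z \<noteq> 1\<close> by (simp add: sum_gp_strict)
    also have "\<dots> = 0" by (simp add: zpow)
    finally show ?thesis using False by simp
  qed
qed

lemma cnt_Suc:
  assumes "\<forall>i<Suc m. finite (A i)"
  shows "cnt k b (Suc m) A S = (\<Sum>u\<in>A m. cnt k b m A (S + yv k b m u))"
proof -
  have eq: "(\<Sum>i<Suc m. yv k b i ((x(m:=u)) i)) = (\<Sum>i<m. yv k b i (x i)) + yv k b m u" for x u
    by (simp add: sum.lessThan_Suc)
  show ?thesis unfolding cnt_def sum_rect_Suc[OF assms] eq
    by (simp add: add_ac)
qed

lemma fourier:
  assumes "\<forall>i<m. finite (A i)" "k > 0"
  shows "complex_of_real (cnt k b m A S) = (\<Sum>j<2*k. om k j S * (\<Prod>i<m. Pf k b A i j)) / of_nat (2*k)"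
  using assms(1)
proof (induction m arbitrary: S)
  case 0
  have "cnt k b 0 A S = (if S mod (2*k) = 0 then 1 else 0)"
    by (simp add: cnt_def rect_0)
  then show ?case using roots_sum[OF assms(2), of S] assms(2) by auto
next
  case (Suc m)
  have IH: "complex_of_real (cnt k b m A S') = (\<Sum>j<2*k. om k j S' * (\<Prod>i<m. Pf k b A i j)) / of_nat (2*k)" for S'
    using Suc by auto
  have "complex_of_real (cnt k b (Suc m) A S) = (\<Sum>u\<in>A m. complex_of_real (cnt k b m A (S + yv k b m u)))"
    using cnt_Suc[OF Suc.prems] by simp
  also have "\<dots> = (\<Sum>u\<in>A m. (\<Sum>j<2*k. om k j S * om k j (yv k b m u) * (\<Prod>i<m. Pf k b A i j)) / of_nat (2*k))"
    by (simp add: IH om_add)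
  also have "\<dots> = (\<Sum>j<2*k. \<Sum>u\<in>A m. om k j S * om k j (yv k b m u) * (\<Prod>i<m. Pf k b A i j)) / of_nat (2*k)"
    by (simp add: sum_divide_distrib[symmetric] sum.swap[of _ "A m"])
  also have "\<dots> = (\<Sum>j<2*k. om k j S * (Pf k b A m j * (\<Prod>i<m. Pf k b A i j))) / of_nat (2*k)"
    unfolding Pf_def[of k b A m] by (simp add: sum_distrib_left sum_distrib_right mult.assoc)
  also have "\<dots> = (\<Sum>j<2*k. om k j S * (\<Prod>i<Suc m. Pf k b A i j)) / of_nat (2*k)"
    by (simp add: mult_ac)
  finally show ?case .
qed

lemma abs_cos_shift: "\<bar>cos (x + pi * of_int t)\<bar> = \<bar>cos x\<bar>"
  by (simp add: cos_add abs_mult)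

lemma cos_abs_bound:
  assumes M: "M > 0" and nd: "\<not> (int M dvd s)"
  shows "\<bar>cos (pi * of_int s / real M)\<bar> \<le> cos (pi / real M)"
proof -
  define t where "t = s div int M"
  define r where "r = s mod int M"
  have s: "s = int M * t + r" unfolding t_def r_def by simp
  have r0: "0 \<le> r" unfolding r_def using M by simp
  have rM: "r < int M" unfolding r_def using M by simp
  have rne: "r \<noteq> 0" using nd unfolding r_def by (simp add: dvd_eq_mod_eq_0)
  have r1: "1 \<le> r" using r0 rne by simp
  have rM1: "r \<le> int M - 1" using rM by simp
  have Mpos: "real M > 0" using M by simp
  have e: "pi * of_int s / real M = pi * of_int r / real M + pi * of_int t"
    unfolding s using Mpos by (simp add: field_simps)
  define y where "y = pi * of_int r / real M"
  have y1: "pi / real M \<le> y"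
  proof -
    have "pi * 1 \<le> pi * of_int r" using r1 by simp
    then show ?thesis unfolding y_def using Mpos by (simp add: divide_right_mono)
  qed
  have y2: "y \<le> pi - pi / real M"
  proof -
    have "real_of_int r \<le> real M - 1" using rM1 by linarith
    then have "pi * of_int r \<le> pi * (real M - 1)" by simp
    then have "pi * of_int r / real M \<le> pi * (real M - 1) / real M" using Mpos by (simp add: divide_right_mono)
    also have "\<dots> = pi - pi / real M" using Mpos by (simp add: field_simps)
    finally show ?thesis unfolding y_def .
  qed
  have p0: "0 \<le> pi / real M" using Mpos by simp
  have c1: "cos y \<le> cos (pi / real M)"
    by (rule cos_monotone_0_pi_le) (use p0 y1 y2 in linarith)+
  have c2: "- cos y \<le> cos (pi / real M)"
  proof -
    have "cos (pi - y) \<le> cos (pi / real M)"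
      by (rule cos_monotone_0_pi_le) (use p0 y1 y2 in linarith)+
    then show ?thesis by simp
  qed
  have "\<bar>cos (pi * of_int s / real M)\<bar> = \<bar>cos y\<bar>" unfolding e y_def by (rule abs_cos_shift)
  also have "\<dots> \<le> cos (pi / real M)" using c1 c2 by (simp add: abs_le_iff)
  finally show ?thesis .
qed

lemma sin_pow2: "sin (pi / 2^(m+1)) \<ge> 1 / 2^m"
proof (induction m)
  case 0 then show ?case by simp
next
  case (Suc m)
  define x where "x = pi / 2^(m+2)"
  have xe: "pi / 2^(m+1) = 2 * x" unfolding x_def by (simp add: field_simps)
  have x0: "0 \<le> x" unfolding x_def by simp
  have xpi: "x \<le> pi"
  proof -
    have h: "(1::real) \<le> 2^(m+2)" by (rule one_le_power) simp
    have "pi / 2^(m+2) \<le> pi / 1" by (rule divide_left_mono) (use h in \<open>auto simp: less_imp_le\<close>)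
    then show ?thesis unfolding x_def by simp
  qed
  have s0: "0 \<le> sin x" using x0 xpi by (rule sin_ge_zero)
  have "1 / 2^m \<le> sin (2 * x)" using Suc xe by simp
  also have "\<dots> = 2 * sin x * cos x" by (rule sin_double)
  also have "\<dots> \<le> 2 * sin x" using s0 by (simp add: mult_left_le)
  finally have "1 / 2^m \<le> 2 * sin x" .
  then show ?case unfolding x_def by (simp add: field_simps)
qed

lemma cos_k_bound:
  assumes "k = (2::nat)^J"
  shows "cos (pi / (2 * real k)) \<le> 1 - 1 / (2 * real k ^ 2)"
proof -
  define x where "x = pi / 2^(J+2)"
  have e: "pi / (2 * real k) = 2 * x" unfolding x_def assms by (simp add: field_simps)
  have s: "sin x \<ge> 1 / 2^(J+1)" unfolding x_def using sin_pow2[of "J+1"] by simp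
  have s0: "0 \<le> 1 / (2::real)^(J+1)" by simp
  have "(1 / (2::real)^(J+1))^2 \<le> sin x ^ 2" using s s0 by (rule power_mono)
  moreover have "(1 / (2::real)^(J+1))^2 = 1 / (4 * real k ^ 2)"
    unfolding assms by (simp add: power_mult_distrib power_add field_simps flip: power_mult)
  ultimately have "1 / (4 * real k ^ 2) \<le> sin x ^ 2" by simp
  then have "cos (2 * x) \<le> 1 - 1 / (2 * real k ^ 2)" unfolding cos_double_sin by (simp add: field_simps)
  then show ?thesis unfolding e .
qed

lemma cos_pow_bound:
  assumes "k = (2::nat)^J" "M \<ge> 0"
  shows "cos (pi / (2 * real k)) ^ M * (1 + real M / (2 * real k ^ 2)) \<le> 1"
proof -
  define a where "a = 1 / (2 * real k ^ 2)"
  have kpos: "real k > 0" using assms by simp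
  have a0: "0 \<le> a" unfolding a_def by simp
  have k1: "1 \<le> real k" using assms(1) by simp
  have "1 \<le> real k ^ 2" using k1 by (simp add: one_le_power)
  then have "1 \<le> 2 * real k ^ 2" by linarith
  then have a1: "a \<le> 1" unfolding a_def by (simp add: divide_le_eq)
  define c where "c = cos (pi / (2 * real k))"
  have c0: "0 \<le> c" unfolding c_def
  proof (rule cos_ge_zero)
    have "0 \<le> pi / (2 * real k)" using kpos by simp
    then show "- (pi / 2) \<le> pi / (2 * real k)" using pi_gt_zero by linarith
    have "2 * 1 \<le> 2 * real k" using k1 by linarith
    then have "pi / (2 * real k) \<le> pi / (2 * 1)" by (intro divide_left_mono) (use kpos in auto)
    then show "pi / (2 * real k) \<le> pi / 2" by simp
  qed
  have c1: "c \<le> 1 - a" unfolding c_def a_def using cos_k_bound[OF assms(1)] .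
  have "1 + real M * a \<le> (1 + a) ^ M" by (rule Bernoulli_inequality) (use a0 in simp)
  then have "c ^ M * (1 + real M * a) \<le> c ^ M * (1 + a) ^ M" using c0 by (simp add: mult_left_mono)
  also have "\<dots> = (c * (1 + a)) ^ M" by (simp add: power_mult_distrib)
  also have "\<dots> \<le> 1"
  proof (rule power_le_one)
    show "0 \<le> c * (1 + a)" using c0 a0 by simp
    have "c * (1 + a) \<le> (1 - a) * (1 + a)" using c1 a0 by (simp add: mult_right_mono)
    also have "\<dots> \<le> 1" by (simp add: algebra_simps)
    finally show "c * (1 + a) \<le> 1" .
  qed
  finally show ?thesis unfolding c_def a_def by (simp add: field_simps)
qed

lemma om_sum: "finite I \<Longrightarrow> om k j (\<Sum>i\<in>I. f i) = (\<Prod>i\<in>I. om k j (f i))"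
  apply (induction I rule: finite_induct)
   apply (simp add: om_def)
  apply (simp add: om_add)
  done

lemma om_norm [simp]: "cmod (om k j y) = 1"
  by (simp add: om_def)

lemma om_k: "k > 0 \<Longrightarrow> om k j k = (-1) ^ j"
proof -
  assume k: "k > 0"
  have e: "pi * real j * real k / real k = real j * pi" using k by simp
  have "om k j k = cis (real j * pi)" unfolding om_def e ..
  also have "\<dots> = cis pi ^ j" by (rule Complex.DeMoivre[symmetric])
  finally show ?thesis by simp
qed

lemma om_shift:
  assumes "real y1 = real y0 + of_int d"
  shows "om k j y1 = om k j y0 * cis (pi * real j * of_int d / real k)"
  unfolding om_def cis_mult assms by (simp add: algebra_simps add_divide_distrib)

lemma cmod_one_cis: "cmod (1 + cis t) = \<bar>2 * cos (t / 2)\<bar>"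
proof -
  have "(cmod (1 + cis t))\<^sup>2 = (1 + cos t)\<^sup>2 + (sin t)\<^sup>2" by (simp add: cmod_power2)
  also have "\<dots> = 2 + 2 * cos t" using sin_cos_squared_add[of t] by (simp add: power2_eq_square algebra_simps)
  also have "cos t = 2 * cos (t/2) ^ 2 - 1" using cos_double_cos[of "t/2"] by simp
  finally have "(cmod (1 + cis t))\<^sup>2 = (\<bar>2 * cos (t / 2)\<bar>)\<^sup>2" by (simp add: power2_eq_square algebra_simps)
  then show ?thesis by (rule power2_eq_imp_eq) auto
qed

lemma prod_if_G: fixes m :: nat shows "G \<subseteq> {..<m} \<Longrightarrow> (\<Prod>i<m. if i \<in> G then a else 1) = a ^ card G"
proof -
  assume G: "G \<subseteq> {..<m}"
  have "(\<Prod>i<m. if i \<in> G then a else 1) = (\<Prod>i\<in>G. a)"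
    by (rule prod.mono_neutral_cong_right[OF finite_lessThan[of m] G]) auto
  then show ?thesis by simp
qed

lemma odd_dvd_cancel:
  fixes j :: nat and q :: int
  assumes "odd q" "int (2^e) dvd int j * q"
  shows "2^e dvd j"
proof -
  have "coprime (int (2^e)) q" using assms(1) by simp
  then have "int (2^e) dvd int j" using assms(2) by (simp add: coprime_dvd_mult_left_iff)
  then show ?thesis by (simp only: of_nat_dvd_iff)
qed

lemma core:
  fixes k J v m :: nat and g :: real and G :: "nat set" and A :: "nat \<Rightarrow> nat set" and S :: nat
  assumes kJ: "k = 2^J" and vJ: "v < J" and gpos: "g > 0"
    and Gm: "G \<subseteq> {..<m}"
    and sing: "\<forall>i<m. i \<notin> G \<longrightarrow> (\<exists>a. A i = {a})"
    and pair: "\<forall>i\<in>G. \<exists>a a' q. A i = {a,a'} \<and> int (yv k b i a') - int (yv k b i a) = 2^v * q \<and> odd q"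
    and small: "(2+g) * cos (pi/(2*real k)) ^ card G \<le> g/(2*real k)"
  shows "Wt k b g m A S \<le> 0"
proof -
  have kpos: "k > 0" using kJ by simp
  have "\<forall>i\<in>G. \<exists>t. A i = {fst t, fst (snd t)} \<and> int (yv k b i (fst (snd t))) - int (yv k b i (fst t)) = 2^v * snd (snd t) \<and> odd (snd (snd t))"
  proof
    fix i assume "i \<in> G"
    then obtain a a' q where "A i = {a,a'}" "int (yv k b i a') - int (yv k b i a) = 2^v * q" "odd q" using pair by blast
    then show "\<exists>t. A i = {fst t, fst (snd t)} \<and> int (yv k b i (fst (snd t))) - int (yv k b i (fst t)) = 2^v * snd (snd t) \<and> odd (snd (snd t))"
      by (intro exI[of _ "(a,a',q)"]) simp
  qed
  from bchoice[OF this] obtain f where f: "\<forall>i\<in>G. A i = {fst (f i), fst (snd (f i))} \<and> int (yv k b i (fst (snd (f i)))) - int (yv k b i (fst (f i))) = 2^v * snd (snd (f i)) \<and> odd (snd (snd (f i)))"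
    by blast
  define a0 where "a0 i = fst (f i)" for i
  define a1 where "a1 i = fst (snd (f i))" for i
  define q where "q i = snd (snd (f i))" for i
  have pA: "A i = {a0 i, a1 i}" if "i \<in> G" for i using f that unfolding a0_def a1_def by blast
  have pd: "int (yv k b i (a1 i)) - int (yv k b i (a0 i)) = 2^v * q i" if "i \<in> G" for i
    using f that unfolding a0_def a1_def q_def by blast
  have pq: "odd (q i)" if "i \<in> G" for i using f that unfolding q_def by blast
  have "\<forall>i\<in>{..<m}-G. \<exists>a. A i = {a}" using sing by blast
  from bchoice[OF this] obtain s where s: "\<forall>i\<in>{..<m}-G. A i = {s i}" by blast
  have sA: "A i = {s i}" if "i < m" "i \<notin> G" for i using s that by blast
  define ab where "ab i = (if i \<in> G then a0 i else s i)" for i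
  define yb where "yb i = yv k b i (ab i)" for i
  have fin: "\<forall>i<m. finite (A i)"
  proof (intro allI impI)
    fix i assume "i < m"
    then show "finite (A i)" using pA sA by (cases "i \<in> G") auto
  qed
  have cong: "(2::int)^v dvd int (yv k b i u) - int (yb i)" if "i < m" "u \<in> A i" for i u
  proof (cases "i \<in> G")
    case True
    then have "u = a0 i \<or> u = a1 i" using pA that by blast
    then show ?thesis
    proof
      assume "u = a0 i" then show ?thesis using True by (simp add: yb_def ab_def)
    next
      assume "u = a1 i" then show ?thesis using True pd[OF True] by (simp add: yb_def ab_def)
    qed
  next
    case False
    then have "u = s i" using sA that by blast
    then show ?thesis using False by (simp add: yb_def ab_def)
  qed
  define Sb where "Sb = S + (\<Sum>i<m. yb i)"
  have k2v: "(2::nat)^v dvd k" unfolding kJ using vJ by (simp add: le_imp_power_dvd)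
  show ?thesis
  proof (cases "2^v dvd Sb")
    case False
    have z: "cnt k b m A S' = 0" if S': "(2::int)^v dvd int S' - int S" for S'
    proof -
      have "\<forall>x\<in>rect m A. \<not> ((S' + (\<Sum>i<m. yv k b i (x i))) mod (2*k) = 0)"
      proof (intro ballI notI)
        fix x assume x: "x \<in> rect m A" and md: "(S' + (\<Sum>i<m. yv k b i (x i))) mod (2*k) = 0"
        have "2^v dvd 2*k" using k2v by simp
        moreover have "2*k dvd S' + (\<Sum>i<m. yv k b i (x i))" using md by (simp add: mod_eq_0_iff_dvd)
        ultimately have "2^v dvd S' + (\<Sum>i<m. yv k b i (x i))" by (rule dvd_trans)
        then have "int (2^v) dvd int (S' + (\<Sum>i<m. yv k b i (x i)))" by (simp only: of_nat_dvd_iff)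
        then have h1: "(2::int)^v dvd int S' + (\<Sum>i<m. int (yv k b i (x i)))" by simp
        have h2: "(2::int)^v dvd (\<Sum>i<m. int (yv k b i (x i)) - int (yb i))"
        proof (rule dvd_sum)
          fix i assume "i \<in> {..<m}"
          then have "i < m" "x i \<in> A i" using x by (auto simp: rect_def)
          then show "(2::int)^v dvd int (yv k b i (x i)) - int (yb i)" by (rule cong)
        qed
        have "int Sb = (int S' + (\<Sum>i<m. int (yv k b i (x i)))) - (\<Sum>i<m. int (yv k b i (x i)) - int (yb i)) - (int S' - int S)"
          unfolding Sb_def by (simp add: sum_subtractf of_nat_sum)
        moreover have "(2::int)^v dvd (int S' + (\<Sum>i<m. int (yv k b i (x i)))) - (\<Sum>i<m. int (yv k b i (x i)) - int (yb i)) - (int S' - int S)"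
          by (rule dvd_diff[OF dvd_diff[OF h1 h2] S'])
        ultimately have "(2::int)^v dvd int Sb" by simp
        then have "int (2^v) dvd int Sb" by simp
        then have "2^v dvd Sb" by (simp only: of_nat_dvd_iff)
        with False show False by simp
      qed
      then show ?thesis unfolding cnt_def by (intro sum.neutral) auto
    qed
    have "cnt k b m A S = 0" by (rule z) simp
    moreover have "cnt k b m A (S + k) = 0"
    proof (rule z)
      have "int (2^v) dvd int k" using k2v by (simp only: of_nat_dvd_iff)
      then show "(2::int)^v dvd int (S + k) - int S" by simp
    qed
    ultimately show ?thesis by (simp add: Wt_def)
  next
    case True
    then obtain r where r: "Sb = 2^v * r" by blast
    define c where "c = cos (pi / (2 * real k))"
    define p where "p = card G"
    define Mv where "Mv = (2::nat)^(J - v + 1)"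
    have Mv2: "2^v * Mv = 2 * k" unfolding Mv_def kJ using vJ
      by (simp add: power_add[symmetric])
    have Mveven: "even Mv" unfolding Mv_def by simp
    have Mvpos: "Mv > 0" unfolding Mv_def by simp
    have Mvle: "Mv \<le> 2 * k" 
    proof -
      have "1 * Mv \<le> 2^v * Mv" by (rule mult_right_mono) simp_all
      then show ?thesis using Mv2 by simp
    qed
    define Pi where "Pi j = (\<Prod>i<m. Pf k b A i j)" for j
    define co where "co j = complex_of_real (1 - (1+g) * (-1)^j)" for j
    define tm where "tm j = om k j S * co j * Pi j" for j
    have W: "complex_of_real (Wt k b g m A S) = (\<Sum>j<2*k. tm j) / of_nat (2*k)"
    proof -
      have "complex_of_real (Wt k b g m A S) = complex_of_real (cnt k b m A S) - complex_of_real (1+g) * complex_of_real (cnt k b m A (S+k))"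
        by (simp add: Wt_def)
      also have "\<dots> = (\<Sum>j<2*k. om k j S * Pi j) / of_nat (2*k) - complex_of_real (1+g) * ((\<Sum>j<2*k. om k j S * (-1)^j * Pi j) / of_nat (2*k))"
        using fourier[OF fin kpos, of b S] fourier[OF fin kpos, of b "S+k"]
        by (simp add: Pi_def om_add om_k[OF kpos])
      also have "\<dots> = (\<Sum>j<2*k. om k j S * Pi j - complex_of_real (1+g) * (om k j S * (-1)^j * Pi j)) / of_nat (2*k)"
        by (simp add: sum_subtractf sum_distrib_left diff_divide_distrib)
      also have "\<dots> = (\<Sum>j<2*k. tm j) / of_nat (2*k)"
        by (intro arg_cong[where f="\<lambda>z. z / of_nat (2*k)"] sum.cong refl) (simp add: tm_def co_def algebra_simps)
      finally show ?thesis .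
    qed
    have Wre: "Wt k b g m A S = (\<Sum>j<2*k. Re (tm j)) / (2 * real k)"
    proof -
      have "Wt k b g m A S = Re (complex_of_real (Wt k b g m A S))" by simp
      also have "\<dots> = Re ((\<Sum>j<2*k. tm j) / of_nat (2*k))" by (simp only: W)
      also have "\<dots> = (\<Sum>j<2*k. Re (tm j)) / (2 * real k)" by simp
      finally show ?thesis .
    qed
    have c0: "0 \<le> c" unfolding c_def
    proof (rule cos_ge_zero)
      have "0 \<le> pi / (2 * real k)" by simp
      then show "- (pi / 2) \<le> pi / (2 * real k)" using pi_gt_zero by linarith
      have "2 * 1 \<le> 2 * real k" using kpos by simp
      then have "pi / (2 * real k) \<le> pi / (2 * 1)" by (intro divide_left_mono) (use kpos in auto)
      then show "pi / (2 * real k) \<le> pi / 2" by simp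
    qed
    have a01: "a0 i \<noteq> a1 i" if "i \<in> G" for i
    proof
      assume "a0 i = a1 i"
      then have "2^v * q i = 0" using pd[OF that] by simp
      then have "q i = 0" by simp
      then show False using pq[OF that] by simp
    qed
    have dreal: "real (yv k b i (a1 i)) = real (yv k b i (a0 i)) + of_int (2^v * q i)" if "i \<in> G" for i
    proof -
      have "real_of_int (int (yv k b i (a1 i)) - int (yv k b i (a0 i))) = real_of_int (2^v * q i)"
        using pd[OF that] by simp
      then show ?thesis by simp
    qed
    have Pfpair: "Pf k b A i j = om k j (yb i) * (1 + cis (pi * real j * of_int (2^v * q i) / real k))" if "i \<in> G" for i j
      using that a01[OF that] om_shift[OF dreal[OF that]]
      by (simp add: Pf_def pA yb_def ab_def algebra_simps)
    have Pfsing: "Pf k b A i j = om k j (yb i)" if "i < m" "i \<notin> G" for i j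
      using that by (simp add: Pf_def sA yb_def ab_def)
    have angle: "pi * real j * of_int (2^v * q i) / real k = 2 * (pi * of_int (int j * q i) / real Mv)" for i j
    proof -
      have "real (2^v * Mv) = real (2 * k)" using Mv2 by (simp only:)
      then have e: "2^v * real Mv = 2 * real k" by simp
      show ?thesis using kpos Mvpos e by (simp add: field_simps)
    qed
    have main: "tm j = complex_of_real (- g * 2^p)" if md: "Mv dvd j" for j
    proof -
      obtain t where t: "j = Mv * t" using md by (auto elim: dvdE)
      have one: "cis (pi * real j * of_int (2^v * q i) / real k) = 1" for i
      proof -
        have "pi * real j * of_int (2^v * q i) / real k = 2 * pi * of_int (int t * q i)"
          unfolding angle t using Mvpos by (simp add: field_simps)
        then show ?thesis by simp
      qed
      have Pfm: "Pf k b A i j = of_nat (if i \<in> G then 2 else 1) * om k j (yb i)" if "i < m" for i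
        using that Pfpair[of i j] Pfsing[of i j] one[of i] by auto
      have "Pi j = (\<Prod>i<m. of_nat (if i \<in> G then 2 else 1)) * (\<Prod>i<m. om k j (yb i))"
        unfolding Pi_def by (simp add: Pfm prod.distrib)
      also have "(\<Prod>i<m. (of_nat (if i \<in> G then 2 else 1) :: complex)) = (\<Prod>i<m. if i \<in> G then 2 else 1)"
        by (intro prod.cong) auto
      also have "\<dots> = 2 ^ p" unfolding p_def by (rule prod_if_G[OF Gm])
      also have "(\<Prod>i<m. om k j (yb i)) = om k j (\<Sum>i<m. yb i)" by (simp add: om_sum)
      finally have Pij: "Pi j = 2^p * om k j (\<Sum>i<m. yb i)" .
      have "om k j S * om k j (\<Sum>i<m. yb i) = om k j Sb" unfolding Sb_def by (simp add: om_add)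
      also have "\<dots> = 1"
      proof -
        have "pi * real j * real Sb / real k = 2 * pi * real (t * r)"
        proof -
          have "real (2^v * Mv) = real (2 * k)" using Mv2 by (simp only:)
          then have e: "2^v * real Mv = 2 * real k" by simp
          show ?thesis unfolding t r using kpos e by (simp add: field_simps)
        qed
        then show ?thesis unfolding om_def by simp
      qed
      finally have oo: "om k j S * om k j (\<Sum>i<m. yb i) = 1" .
      have ev: "even j" using Mveven t by simp
      have "co j = complex_of_real (- g)" unfolding co_def using ev by simp
      then have cj: "co j = complex_of_real (- g)" .
      have "tm j = co j * 2^p * (om k j S * om k j (\<Sum>i<m. yb i))"
        unfolding tm_def Pij by (simp add: mult_ac)
      also have "\<dots> = complex_of_real (- g) * 2^p" unfolding oo cj by simp
      also have "\<dots> = complex_of_real (- g * 2^p)" by simp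
      finally show ?thesis .
    qed
    have nonmain: "cmod (tm j) \<le> (2+g) * (2*c)^p" if nd: "\<not> Mv dvd j" for j
    proof -
      have "cmod (co j) = \<bar>1 - (1+g) * (-1)^j\<bar>" unfolding co_def by (rule norm_of_real)
      also have "\<dots> \<le> 2 + g" using gpos by (cases "even j") auto
      finally have cco: "cmod (co j) \<le> 2 + g" .
      have bnd: "cmod (Pf k b A i j) \<le> (if i \<in> G then 2*c else 1)" if "i < m" for i
      proof (cases "i \<in> G")
        case True
        have "cmod (Pf k b A i j) = cmod (1 + cis (pi * real j * of_int (2^v * q i) / real k))"
          using Pfpair[OF True, of j] by (simp add: norm_mult)
        also have "\<dots> = \<bar>2 * cos (pi * of_int (int j * q i) / real Mv)\<bar>"
          unfolding angle cmod_one_cis by simp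
        also have "\<dots> \<le> 2 * c"
        proof -
          have ndq: "\<not> (int Mv dvd int j * q i)"
          proof
            assume "int Mv dvd int j * q i"
            then have "2^(J - v + 1) dvd j" using odd_dvd_cancel[OF pq[OF True]] unfolding Mv_def by blast
            with nd show False unfolding Mv_def by simp
          qed
          have "\<bar>cos (pi * of_int (int j * q i) / real Mv)\<bar> \<le> cos (pi / real Mv)"
            by (rule cos_abs_bound[OF Mvpos ndq])
          also have "cos (pi / real Mv) \<le> c" unfolding c_def
          proof (rule cos_monotone_0_pi_le)
            show "0 \<le> pi / (2 * real k)" by simp
            have "real Mv \<le> 2 * real k" using Mvle by linarith
            then show "pi / (2 * real k) \<le> pi / real Mv" using Mvpos by (intro divide_left_mono) auto
            have "1 \<le> real Mv" using Mvpos by linarith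
            then have "pi / real Mv \<le> pi / 1" by (intro divide_left_mono) auto
            then show "pi / real Mv \<le> pi" by simp
          qed
          finally show ?thesis by (simp add: abs_mult)
        qed
        finally show ?thesis using True by simp
      next
        case False
        then show ?thesis using Pfsing[OF that False] by simp
      qed
      have "cmod (Pi j) = (\<Prod>i<m. cmod (Pf k b A i j))" unfolding Pi_def by (simp add: prod_norm)
      also have "\<dots> \<le> (\<Prod>i<m. if i \<in> G then 2*c else 1)"
        by (rule prod_mono) (use bnd in auto)
      also have "\<dots> = (2*c)^p" unfolding p_def by (rule prod_if_G[OF Gm])
      finally have cp: "cmod (Pi j) \<le> (2*c)^p" .
      have "cmod (tm j) = cmod (co j) * cmod (Pi j)" unfolding tm_def by (simp add: norm_mult)
      also have "\<dots> \<le> (2+g) * (2*c)^p"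
        by (rule mult_mono[OF cco cp]) (use gpos in auto)
      finally show ?thesis .
    qed
    have tj: "Re (tm j) \<le> (2+g) * (2*c)^p" for j
    proof (cases "Mv dvd j")
      case True
      have "Re (tm j) = - g * 2^p" using main[OF True] by simp
      also have "\<dots> \<le> 0" using gpos by simp
      also have "0 \<le> (2+g) * (2*c)^p" using gpos c0 by simp
      finally show ?thesis .
    next
      case False
      show ?thesis using nonmain[OF False] complex_Re_le_cmod[of "tm j"] by linarith
    qed
    have t0: "Re (tm 0) = - g * 2^p" using main[of 0] by simp
    have "(\<Sum>j<2*k. Re (tm j)) = (\<Sum>j<Suc (2*k-1). Re (tm j))" using kpos by simp
    also have "\<dots> = Re (tm 0) + (\<Sum>j<2*k-1. Re (tm (Suc j)))" by (rule sum.lessThan_Suc_shift)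
    also have "\<dots> \<le> - g * 2^p + real (2*k-1) * ((2+g) * (2*c)^p)"
      using t0 sum_bounded_above[of "{..<2*k-1}" "\<lambda>j. Re (tm (Suc j))" "(2+g) * (2*c)^p"] tj by simp
    also have "\<dots> \<le> - g * 2^p + real (2*k) * ((2+g) * (2*c)^p)"
    proof -
      have "real (2*k-1) \<le> real (2*k)" by simp
      then show ?thesis using gpos c0 by (intro add_left_mono mult_right_mono) auto
    qed
    also have "\<dots> = 2^p * (2 * real k * ((2+g) * c^p) - g)" by (simp add: power_mult_distrib algebra_simps)
    also have "\<dots> \<le> 0"
    proof -
      have "(2+g) * c^p \<le> g / (2 * real k)" using small unfolding c_def p_def .
      then have "2 * real k * ((2+g) * c^p) \<le> g" using kpos by (simp add: field_simps)
      then show ?thesis by (simp add: mult_nonneg_nonpos)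
    qed
    finally have "(\<Sum>j<2*k. Re (tm j)) \<le> 0" .
    then show ?thesis unfolding Wre using kpos by (simp add: divide_nonpos_pos)
  qed
qed

lemma exists_pow2_odd: "(d::nat) > 0 \<Longrightarrow> \<exists>v w. d = 2^v * w \<and> odd w"
proof (induction d rule: less_induct)
  case (less d)
  show ?case
  proof (cases "odd d")
    case True then show ?thesis by (intro exI[of _ 0] exI[of _ d]) simp
  next
    case False
    then obtain d' where d': "d = 2 * d'" by (auto elim: evenE)
    then have "d' > 0" "d' < d" using less.prems by auto
    then obtain v w where "d' = 2^v * w" "odd w" using less.IH by blast
    then show ?thesis using d' by (intro exI[of _ "Suc v"] exI[of _ w]) simp
  qed
qed

lemma pair_val:
  assumes kJ: "k = 2^J" and sub: "A i \<subseteq> {..<k}" and c2: "card (A i) = 2"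
  shows "\<exists>v<J. \<exists>a a' q. A i = {a,a'} \<and> int (yv k b i a') - int (yv k b i a) = 2^v * q \<and> odd q"
proof -
  obtain x y where xy: "A i = {x, y}" "x \<noteq> y" using c2 by (auto simp: card_2_iff)
  define a where "a = min x y"
  define a' where "a' = max x y"
  have Aa: "A i = {a, a'}" using xy unfolding a_def a'_def by (auto simp: min_def max_def)
  have lt: "a < a'" using xy unfolding a_def a'_def by (auto simp: min_def max_def)
  have a'k: "a' < k" using sub Aa by auto
  obtain v w where vo: "a' - a = 2^v * w" "odd w" using exists_pow2_odd[of "a' - a"] lt by auto
  have w1: "1 \<le> w" using vo(2) by (cases w) auto
  have "2^v * 1 \<le> 2^v * w" using w1 by (rule mult_le_mono2)
  then have "2^v \<le> a' - a" using vo(1) by simp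
  moreover have "a' - a < 2^J" using a'k kJ by simp
  ultimately have "(2::nat)^v < 2^J" by linarith
  then have vJ: "v < J" by (rule power_less_imp_less_exp[rotated]) simp
  define e :: int where "e = (if b i a' then 1 else 0) - (if b i a then 1 else 0)"
  define q where "q = int w + 2^(J - v) * e"
  have kv: "int k = 2^v * 2^(J - v)" unfolding kJ using vJ by (simp add: power_add[symmetric])
  have "int (yv k b i a') - int (yv k b i a) = int (a' - a) + int k * e"
    using lt unfolding yv_def e_def by (simp add: of_nat_diff algebra_simps)
  also have "\<dots> = 2^v * q" unfolding vo(1) q_def kv by (simp add: algebra_simps)
  finally have d: "int (yv k b i a') - int (yv k b i a) = 2^v * q" .
  have "odd q" unfolding q_def using vo(2) vJ by simp
  then show ?thesis using d Aa vJ by blast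
qed


lemma cos_c_01:
  assumes "k > 0"
  shows "0 \<le> cos (pi / (2 * real k))" "cos (pi / (2 * real k)) \<le> 1"
proof -
  show "cos (pi / (2 * real k)) \<le> 1" by simp
  show "0 \<le> cos (pi / (2 * real k))"
  proof (rule cos_ge_zero)
    have "0 \<le> pi / (2 * real k)" by simp
    then show "- (pi / 2) \<le> pi / (2 * real k)" using pi_gt_zero by linarith
    have "2 * 1 \<le> 2 * real k" using assms by simp
    then have "pi / (2 * real k) \<le> pi / (2 * 1)" by (intro divide_left_mono) (use assms in auto)
    then show "pi / (2 * real k) \<le> pi / 2" by simp
  qed
qed

lemma split_nonG:
  fixes k J v m :: nat and g :: real and G :: "nat set"
  assumes kJ: "k = 2^J" and vJ: "v < J" and gpos: "g > 0" and Gm: "G \<subseteq> {..<m}"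
    and small: "(2+g) * cos (pi/(2*real k)) ^ card G \<le> g/(2*real k)"
  shows "card ({i. i<m \<and> card (A i) = 2} - G) = n \<Longrightarrow>
    (\<forall>i<m. finite (A i) \<and> (card (A i) = 1 \<or> card (A i) = 2)) \<Longrightarrow>
    (\<forall>i\<in>G. \<exists>a a' q. A i = {a,a'} \<and> int (yv k b i a') - int (yv k b i a) = 2^v * q \<and> odd q) \<Longrightarrow>
    Wt k b g m A S \<le> 0"
proof (induction n arbitrary: A)
  case 0
  have fin: "finite ({i. i<m \<and> card (A i) = 2} - G)" by simp
  then have e: "{i. i<m \<and> card (A i) = 2} - G = {}" using 0 by simp
  have sing: "\<forall>i<m. i \<notin> G \<longrightarrow> (\<exists>a. A i = {a})"
  proof (intro allI impI)
    fix i assume i: "i < m" "i \<notin> G"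
    then have "card (A i) \<noteq> 2" using e by blast
    then have "card (A i) = 1" using 0(2) i by blast
    then show "\<exists>a. A i = {a}" by (simp add: card_1_singleton_iff)
  qed
  show ?case by (rule core[OF kJ vJ gpos Gm sing 0(3) small])
next
  case (Suc n)
  have "{i. i<m \<and> card (A i) = 2} - G \<noteq> {}"
  proof
    assume "{i. i<m \<and> card (A i) = 2} - G = {}"
    then have "card ({i. i<m \<and> card (A i) = 2} - G) = 0" by (simp only: card.empty)
    then show False using Suc.prems(1) by simp
  qed
  then obtain i where i: "i < m" "card (A i) = 2" "i \<notin> G" by blast
  then obtain a a' where aa: "A i = {a,a'}" "a \<noteq> a'" by (auto simp: card_2_iff)
  have fin: "\<forall>i<m. finite (A i)" using Suc.prems(2) by blast
  have W: "Wt k b g m A S = Wt k b g m (A(i:={a})) S + Wt k b g m (A(i:={a'})) S"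
    by (rule Wt_split[OF fin i(1)]) (use aa in auto)
  have IHapp: "Wt k b g m (A(i:={x})) S \<le> 0" for x
  proof (rule Suc.IH)
    have "{l. l<m \<and> card ((A(i:={x})) l) = 2} - G = ({l. l<m \<and> card (A l) = 2} - G) - {i}"
      by auto
    moreover have "i \<in> {l. l<m \<and> card (A l) = 2} - G" using i by blast
    ultimately show "card ({l. l<m \<and> card ((A(i:={x})) l) = 2} - G) = n"
      using Suc.prems(1) by simp
    show "\<forall>l<m. finite ((A(i:={x})) l) \<and> (card ((A(i:={x})) l) = 1 \<or> card ((A(i:={x})) l) = 2)"
      using Suc.prems(2) by auto
    show "\<forall>l\<in>G. \<exists>a a' q. (A(i:={x})) l = {a,a'} \<and> int (yv k b l a') - int (yv k b l a) = 2^v * q \<and> odd q"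
      using Suc.prems(3) i(3) by auto
  qed
  show ?case unfolding W using IHapp[of a] IHapp[of a'] by simp
qed

definition psi :: "nat \<Rightarrow> nat \<Rightarrow> real" where
  "psi k a = real (a div 2) * (2 / real k) + real (a mod 2)"

definition Bnd :: "nat \<Rightarrow> nat \<Rightarrow> nat \<Rightarrow> (nat \<Rightarrow> nat set) \<Rightarrow> real" where
  "Bnd k P0 m A = real k ^ P0 * (\<Prod>i<m. psi k (card (A i)))"

lemma psi_nonneg: "0 \<le> psi k a" by (simp add: psi_def)

lemma Bnd_nonneg: "0 \<le> Bnd k P0 m A"
  unfolding Bnd_def by (intro mult_nonneg_nonneg prod_nonneg) (auto simp: psi_nonneg)

lemma psi_split: "a \<ge> 2 \<Longrightarrow> psi k a = psi k 2 + psi k (a - 2)"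
proof -
  assume a: "a \<ge> 2"
  then obtain c where c: "a = c + 2" by (metis le_add_diff_inverse2)
  have "a div 2 = c div 2 + 1" "a mod 2 = c mod 2" unfolding c by simp_all
  then show ?thesis unfolding psi_def using c by (simp add: algebra_simps)
qed

lemma Bnd_upd:
  assumes "i < m"
  shows "Bnd k P0 m (A(i:=X)) = real k ^ P0 * (psi k (card X) * (\<Prod>l\<in>{..<m} - {i}. psi k (card (A l))))"
proof -
  have "(\<Prod>l<m. psi k (card ((A(i:=X)) l))) = psi k (card ((A(i:=X)) i)) * (\<Prod>l\<in>{..<m} - {i}. psi k (card ((A(i:=X)) l)))"
    by (rule prod.remove) (use assms in auto)
  also have "(\<Prod>l\<in>{..<m} - {i}. psi k (card ((A(i:=X)) l))) = (\<Prod>l\<in>{..<m} - {i}. psi k (card (A l)))"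
    by (rule prod.cong) auto
  finally show ?thesis unfolding Bnd_def by simp
qed

lemma Bnd_split:
  assumes "i < m" "finite (A i)" "P \<subseteq> A i" "card P = 2" "card (A i) \<ge> 3"
  shows "Bnd k P0 m A = Bnd k P0 m (A(i:=P)) + Bnd k P0 m (A(i:=A i - P))"
proof -
  have AA: "A = A(i := A i)" by simp
  have cR: "card (A i - P) = card (A i) - 2" using assms by (simp add: card_Diff_subset finite_subset)
  have "psi k (card (A i)) = psi k (card P) + psi k (card (A i - P))"
    unfolding cR assms(4) using assms(5) by (intro psi_split) simp
  then show ?thesis
    using Bnd_upd[OF assms(1), of k P0 A "A i"] Bnd_upd[OF assms(1), of k P0 A P] Bnd_upd[OF assms(1), of k P0 A "A i - P"]
    by (simp add: algebra_simps)
qed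

lemma sum_upd_less:
  fixes m :: nat
  assumes "i < m" "card X < card (A i)"
  shows "(\<Sum>l<m. card ((A(i:=X)) l)) < (\<Sum>l<m. card (A l))"
proof -
  have "(\<Sum>l<m. card ((A(i:=X)) l)) = card ((A(i:=X)) i) + (\<Sum>l\<in>{..<m} - {i}. card ((A(i:=X)) l))"
    by (rule sum.remove) (use assms in auto)
  also have "(\<Sum>l\<in>{..<m} - {i}. card ((A(i:=X)) l)) = (\<Sum>l\<in>{..<m} - {i}. card (A l))"
    by (rule sum.cong) auto
  also have "card ((A(i:=X)) i) + (\<Sum>l\<in>{..<m} - {i}. card (A l)) < card (A i) + (\<Sum>l\<in>{..<m} - {i}. card (A l))"
    using assms by simp
  also have "\<dots> = (\<Sum>l<m. card (A l))"
    by (rule sum.remove[symmetric]) (use assms in auto)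
  finally show ?thesis .
qed

lemma main_bound:
  fixes k J M P0 m :: nat and g :: real
  assumes kJ: "k = 2^J" and J1: "J \<ge> 1" and M1: "M \<ge> 1" and gpos: "g > 0"
    and small: "(2+g) * cos (pi/(2*real k)) ^ M \<le> g/(2*real k)"
    and P0: "P0 = J * M"
  shows "(\<forall>i<m. A i \<subseteq> {..<k}) \<Longrightarrow> Wt k b g m A S \<le> Bnd k P0 m A"
proof (induction "\<Sum>i<m. card (A i)" arbitrary: A rule: less_induct)
  case less
  have kpos: "k > 0" using kJ by simp
  have fin: "\<forall>i<m. finite (A i)" using less.prems finite_subset by blast
  show ?case
  proof (cases "\<exists>i<m. card (A i) \<ge> 3")
    case True
    then obtain i where i: "i < m" "card (A i) \<ge> 3" by blast
    obtain P where P: "P \<subseteq> A i" "card P = 2"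
      using obtain_subset_with_card_n[of 2 "A i"] i(2) by auto
    define R where "R = A i - P"
    have W: "Wt k b g m A S = Wt k b g m (A(i:=P)) S + Wt k b g m (A(i:=R)) S"
      by (rule Wt_split[OF fin i(1)]) (use P in \<open>auto simp: R_def\<close>)
    have B: "Bnd k P0 m A = Bnd k P0 m (A(i:=P)) + Bnd k P0 m (A(i:=R))"
      unfolding R_def by (rule Bnd_split[OF i(1)]) (use fin i P in auto)
    have cR: "card R = card (A i) - 2" unfolding R_def using P fin i(1)
      by (simp add: card_Diff_subset finite_subset)
    have h1: "Wt k b g m (A(i:=P)) S \<le> Bnd k P0 m (A(i:=P))"
    proof (rule less.hyps)
      show "(\<Sum>l<m. card ((A(i:=P)) l)) < (\<Sum>l<m. card (A l))"
        by (rule sum_upd_less) (use i P in auto)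
      show "\<forall>l<m. (A(i:=P)) l \<subseteq> {..<k}" using less.prems P by auto
    qed
    have h2: "Wt k b g m (A(i:=R)) S \<le> Bnd k P0 m (A(i:=R))"
    proof (rule less.hyps)
      show "(\<Sum>l<m. card ((A(i:=R)) l)) < (\<Sum>l<m. card (A l))"
        by (rule sum_upd_less) (use i cR in auto)
      show "\<forall>l<m. (A(i:=R)) l \<subseteq> {..<k}" using less.prems unfolding R_def by auto
    qed
    show ?thesis unfolding W B using h1 h2 by simp
  next
    case False
    then have le2: "\<forall>i<m. card (A i) \<le> 2" by auto
    show ?thesis
    proof (cases "\<exists>i<m. A i = {}")
      case True
      then obtain i where "i < m" "A i = {}" by blast
      then have "Wt k b g m A S = 0" by (rule Wt_empty)
      then show ?thesis using Bnd_nonneg by simp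
    next
      case False
      have c12: "\<forall>i<m. finite (A i) \<and> (card (A i) = 1 \<or> card (A i) = 2)"
      proof (intro allI impI)
        fix i assume i: "i < m"
        have "A i \<noteq> {}" using False i by blast
        then have c0: "card (A i) \<noteq> 0" using fin i by simp
        have c2: "card (A i) \<le> 2" using le2 i by blast
        have "card (A i) = 1 \<or> card (A i) = 2" using c0 c2 by linarith
        then show "finite (A i) \<and> (card (A i) = 1 \<or> card (A i) = 2)" using fin i by blast
      qed
      define Q where "Q = {i. i < m \<and> card (A i) = 2}"
      have Qm: "Q \<subseteq> {..<m}" unfolding Q_def by auto
      have finQ: "finite Q" using Qm finite_subset by blast
      have psiQ: "(\<Prod>i<m. psi k (card (A i))) = (2 / real k) ^ card Q"
      proof -
        have "(\<Prod>i<m. psi k (card (A i))) = (\<Prod>i<m. if i \<in> Q then 2 / real k else 1)"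
        proof (rule prod.cong)
          fix i assume "i \<in> {..<m}"
          then show "psi k (card (A i)) = (if i \<in> Q then 2 / real k else 1)"
            using c12 unfolding Q_def psi_def by auto
        qed simp
        also have "\<dots> = (2 / real k) ^ card Q" by (rule prod_if_G[OF Qm])
        finally show ?thesis .
      qed
      have cardR: "real (card (rect m A)) = 2 ^ card Q"
      proof -
        have "card (rect m A) = (\<Prod>i<m. card (A i))" by (rule card_rect[OF fin])
        also have "\<dots> = (\<Prod>i<m. if i \<in> Q then 2 else 1)"
        proof (rule prod.cong)
          fix i assume "i \<in> {..<m}"
          then show "card (A i) = (if i \<in> Q then 2 else 1)" using c12 unfolding Q_def by auto
        qed simp
        also have "\<dots> = 2 ^ card Q" by (rule prod_if_G[OF Qm])
        finally show ?thesis by simp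
      qed
      show ?thesis
      proof (cases "card Q < P0")
        case True
        have "Wt k b g m A S \<le> cnt k b m A S"
          unfolding Wt_def using cnt_nonneg[of k b m A "S+k"] gpos by simp
        also have "\<dots> \<le> 2 ^ card Q" using cnt_le_card[OF fin, of k b S] cardR by simp
        also have "(2::real) ^ card Q \<le> Bnd k P0 m A"
        proof -
          have "Bnd k P0 m A = real k ^ P0 * (2 / real k) ^ card Q" unfolding Bnd_def psiQ ..
          also have "real k ^ P0 = real k ^ card Q * real k ^ (P0 - card Q)"
            using True by (simp add: power_add[symmetric])
          also have "real k ^ card Q * real k ^ (P0 - card Q) * (2 / real k) ^ card Q
              = 2 ^ card Q * real k ^ (P0 - card Q)"
            using kpos by (simp add: power_divide field_simps)
          finally have e: "Bnd k P0 m A = 2 ^ card Q * real k ^ (P0 - card Q)" .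
          have "1 \<le> real k ^ (P0 - card Q)" using kpos by (simp add: one_le_power)
          then show ?thesis unfolding e by simp
        qed
        finally show ?thesis .
      next
        case False
        define good where "good v i \<longleftrightarrow> (\<exists>a a' q. A i = {a,a'} \<and> int (yv k b i a') - int (yv k b i a) = 2^v * q \<and> odd q)" for v i
        have ex: "\<forall>i\<in>Q. \<exists>v<J. good v i"
        proof
          fix i assume "i \<in> Q"
          then have "A i \<subseteq> {..<k}" "card (A i) = 2" using less.prems unfolding Q_def by auto
          then show "\<exists>v<J. good v i" unfolding good_def by (rule pair_val[OF kJ])
        qed
        define cls where "cls v = {i\<in>Q. good v i}" for v
        have "\<exists>v<J. M \<le> card (cls v)"
        proof (rule ccontr)
          assume "\<not> (\<exists>v<J. M \<le> card (cls v))"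
          then have lt: "\<forall>v<J. card (cls v) \<le> M - 1" by auto
          have "Q \<subseteq> (\<Union>v<J. cls v)" using ex unfolding cls_def by blast
          then have "card Q \<le> card (\<Union>v<J. cls v)"
            by (rule card_mono[rotated]) (auto simp: cls_def intro: finite_subset[OF _ finQ])
          also have "\<dots> \<le> (\<Sum>v<J. card (cls v))" by (rule card_UN_le) simp
          also have "\<dots> \<le> (\<Sum>v<J. M - 1)" by (rule sum_mono) (use lt in auto)
          also have "\<dots> = J * (M - 1)" by simp
          also have "\<dots> < J * M" using J1 M1 by simp
          finally show False using False P0 by simp
        qed
        then obtain v where v: "v < J" "M \<le> card (cls v)" by blast
        have Gm: "cls v \<subseteq> {..<m}" using Qm unfolding cls_def by auto
        have c01: "0 \<le> cos (pi / (2 * real k))" "cos (pi / (2 * real k)) \<le> 1"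
          using cos_c_01[OF kpos] by auto
        have small': "(2+g) * cos (pi/(2*real k)) ^ card (cls v) \<le> g/(2*real k)"
        proof -
          have "cos (pi/(2*real k)) ^ card (cls v) \<le> cos (pi/(2*real k)) ^ M"
            by (rule power_decreasing[OF v(2) c01])
          then have "(2+g) * cos (pi/(2*real k)) ^ card (cls v) \<le> (2+g) * cos (pi/(2*real k)) ^ M"
            using gpos by (intro mult_left_mono) auto
          then show ?thesis using small by linarith
        qed
        have Gp: "\<forall>i\<in>cls v. \<exists>a a' q. A i = {a,a'} \<and> int (yv k b i a') - int (yv k b i a) = 2^v * q \<and> odd q"
          unfolding cls_def good_def by blast
        have "Wt k b g m A S \<le> 0"
          by (rule split_nonG[OF kJ v(1) gpos Gm small' refl c12 Gp])
        then show ?thesis using Bnd_nonneg[of k P0 m A] by linarith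
      qed
    qed
  qed
qed

definition wv :: "real \<Rightarrow> nat \<Rightarrow> nat \<Rightarrow> ptree \<Rightarrow> (nat \<Rightarrow> nat) \<Rightarrow> real" where
  "wv g n k T x = (if clicks n T x then (if ghzP n k (\<lambda>i. run T x i = Some True) x = 0 then - (1+g) else 1) else 0)"

definition Dr :: "nat \<Rightarrow> nat \<Rightarrow> (nat \<Rightarrow> nat set) \<Rightarrow> (nat \<Rightarrow> nat) set" where
  "Dr n k S = {x \<in> rect n S. (\<Sum>i<n. x i) mod k = 0}"

lemma finite_Dr: "\<forall>i<n. S i \<subseteq> {..<k} \<Longrightarrow> finite (Dr n k S)"
  unfolding Dr_def by (rule finite_subset[OF _ finite_rect]) (auto intro: finite_subset)

lemma log_ceil_bound:
  assumes "(t::nat) \<ge> 1"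
  shows "real t \<le> 2 ^ nat \<lceil>log 2 (real t)\<rceil>"
proof -
  have l0: "0 \<le> log 2 (real t)" using assms by simp
  have "real t = 2 powr (log 2 (real t))" using assms by simp
  also have "\<dots> \<le> 2 powr (real_of_int \<lceil>log 2 (real t)\<rceil>)" by (intro powr_mono) auto
  also have "real_of_int \<lceil>log 2 (real t)\<rceil> = real (nat \<lceil>log 2 (real t)\<rceil>)" using l0 by simp
  also have "2 powr real (nat \<lceil>log 2 (real t)\<rceil>) = 2 ^ nat \<lceil>log 2 (real t)\<rceil>" by (simp add: powr_realpow)
  finally show ?thesis .
qed

lemma tree_bound:
  fixes K :: real
  assumes leaf: "\<And>lam S. \<forall>i<n. S i \<subseteq> {..<k} \<Longrightarrow> (\<Sum>x\<in>Dr n k S. wv g n k (Leaf lam) x) \<le> K"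
    and K0: "K \<ge> 0"
  shows "wf_tree n k T \<Longrightarrow> \<forall>i<n. S i \<subseteq> {..<k} \<Longrightarrow> (\<Sum>x\<in>Dr n k S. wv g n k T x) \<le> 2 ^ bits T * K"
proof (induction T arbitrary: S)
  case (Leaf lam)
  then show ?case using leaf[of S lam] by simp
next
  case (Node p f ts)
  have p: "p < n" and ne: "ts \<noteq> []" and fk: "\<forall>v<k. f v < length ts" and wfs: "list_all (wf_tree n k) ts"
    using Node.prems(1) by auto
  define Sc where "Sc c = S(p := {v \<in> S p. f v = c})" for c
  have Sc_sub: "\<forall>i<n. Sc c i \<subseteq> {..<k}" for c using Node.prems(2) unfolding Sc_def by auto
  have U: "Dr n k S = (\<Union>c\<in>{..<length ts}. Dr n k (Sc c))"
  proof (intro equalityI subsetI)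
    fix x assume x: "x \<in> Dr n k S"
    then have "x p \<in> S p" using p by (auto simp: Dr_def rect_def)
    then have "x p < k" using Node.prems(2) p by auto
    then have c: "f (x p) < length ts" using fk by blast
    have "x \<in> Dr n k (Sc (f (x p)))" using x \<open>x p \<in> S p\<close> unfolding Dr_def rect_def Sc_def by auto
    then show "x \<in> (\<Union>c\<in>{..<length ts}. Dr n k (Sc c))" using c by blast
  next
    fix x assume "x \<in> (\<Union>c\<in>{..<length ts}. Dr n k (Sc c))"
    then show "x \<in> Dr n k S" unfolding Dr_def rect_def Sc_def by (auto split: if_splits)
  qed
  have disj: "\<forall>c\<in>{..<length ts}. \<forall>c'\<in>{..<length ts}. c \<noteq> c' \<longrightarrow> Dr n k (Sc c) \<inter> Dr n k (Sc c') = {}"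
    using p unfolding Dr_def rect_def Sc_def by auto
  have eqw: "wv g n k (Node p f ts) x = wv g n k (ts ! c) x" if "c < length ts" "x \<in> Dr n k (Sc c)" for c x
  proof -
    have "f (x p) = c" using that p unfolding Dr_def rect_def Sc_def by auto
    then have r: "run (Node p f ts) x = run (ts ! c) x" using that(1) by simp
    show ?thesis unfolding wv_def clicks_def r by (rule refl)
  qed
  define Mx where "Mx = Max (set (0 # map bits ts))"
  have bc: "bits (ts ! c) \<le> Mx" if "c < length ts" for c
    unfolding Mx_def using that by (intro Max_ge) auto
  have "(\<Sum>x\<in>Dr n k S. wv g n k (Node p f ts) x) = (\<Sum>c<length ts. \<Sum>x\<in>Dr n k (Sc c). wv g n k (Node p f ts) x)"
    unfolding U by (rule sum.UNION_disjoint) (use finite_Dr[OF Sc_sub] disj in auto)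
  also have "\<dots> = (\<Sum>c<length ts. \<Sum>x\<in>Dr n k (Sc c). wv g n k (ts ! c) x)"
    by (intro sum.cong refl) (use eqw in auto)
  also have "\<dots> \<le> (\<Sum>c<length ts. 2 ^ Mx * K)"
  proof (rule sum_mono)
    fix c assume c: "c \<in> {..<length ts}"
    have "(\<Sum>x\<in>Dr n k (Sc c). wv g n k (ts ! c) x) \<le> 2 ^ bits (ts ! c) * K"
    proof (rule Node.IH)
      show "ts ! c \<in> set ts" using c by simp
      show "wf_tree n k (ts ! c)" using wfs c by (simp add: list_all_length)
      show "\<forall>i<n. Sc c i \<subseteq> {..<k}" by (rule Sc_sub)
    qed
    also have "\<dots> \<le> 2 ^ Mx * K" using bc[of c] c K0 by (intro mult_right_mono) (auto intro: power_increasing)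
    finally show "(\<Sum>x\<in>Dr n k (Sc c). wv g n k (ts ! c) x) \<le> 2 ^ Mx * K" .
  qed
  also have "\<dots> = real (length ts) * (2 ^ Mx * K)" by simp
  also have "\<dots> \<le> 2 ^ nat \<lceil>log 2 (real (length ts))\<rceil> * (2 ^ Mx * K)"
    using log_ceil_bound[of "length ts"] ne K0 by (intro mult_right_mono) (auto simp: Suc_le_eq)
  also have "\<dots> = 2 ^ bits (Node p f ts) * K" by (simp add: Mx_def power_add)
  finally show ?case .
qed

lemma pt_arith:
  fixes s beta k :: nat and g :: real
  assumes k: "k > 0"
  shows "(if s mod k = 0 then (if beta mod 2 = ((s mod (2*k)) div k) mod 2 then 1 else -(1+g)) else 0)
    = (if (0 + (s + k*beta)) mod (2*k) = 0 then 1 else 0) - (1+g) * (if (k + (s + k*beta)) mod (2*k) = 0 then (1::real) else 0)"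
proof (cases "s mod k = 0")
  case False
  have n1: "\<not> ((s + k*beta) mod (2*k) = 0)"
  proof
    assume "(s + k*beta) mod (2*k) = 0"
    then have "2*k dvd s + k*beta" by (simp add: mod_eq_0_iff_dvd)
    then have "k dvd s + k*beta" by (meson dvd_mult_right)
    then have "k dvd s" by (simp add: dvd_add_left_iff)
    with False show False by (simp add: mod_eq_0_iff_dvd)
  qed
  have n2: "\<not> ((k + (s + k*beta)) mod (2*k) = 0)"
  proof
    assume "(k + (s + k*beta)) mod (2*k) = 0"
    then have "2*k dvd k + (s + k*beta)" by (simp add: mod_eq_0_iff_dvd)
    then have "k dvd k + (s + k*beta)" by (meson dvd_mult_right)
    then have "k dvd s" by (simp add: dvd_add_right_iff dvd_add_left_iff)
    with False show False by (simp add: mod_eq_0_iff_dvd)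
  qed
  show ?thesis using False n1 n2 by simp
next
  case True
  then have "k dvd s" by (simp add: mod_eq_0_iff_dvd)
  then obtain q where q0: "s = k * q" ..
  then have q: "s = q * k" by (simp add: mult.commute)
  have F: "(s mod (2*k)) div k = q mod 2"
    unfolding q mod_mult_mult2 using k by simp
  have e1: "(0 + (s + k*beta)) mod (2*k) = ((q + beta) mod 2) * k"
  proof -
    have "0 + (s + k*beta) = (q + beta) * k" unfolding q by (simp add: algebra_simps)
    then show ?thesis by (simp only: mod_mult_mult2)
  qed
  have e2: "(k + (s + k*beta)) mod (2*k) = ((q + beta + 1) mod 2) * k"
  proof -
    have "k + (s + k*beta) = (q + beta + 1) * k" unfolding q by (simp add: algebra_simps)
    then show ?thesis by (simp only: mod_mult_mult2)
  qed
  show ?thesis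
  proof (cases "beta mod 2 = q mod 2")
    case True
    then have "(q + beta) mod 2 = 0" by presburger
    moreover have "(q + beta + 1) mod 2 = 1" using True by presburger
    ultimately show ?thesis using \<open>s mod k = 0\<close> F e1 e2 True k by simp
  next
    case False
    then have "(q + beta) mod 2 = 1" by presburger
    moreover have "(q + beta + 1) mod 2 = 0" using False by presburger
    ultimately show ?thesis using \<open>s mod k = 0\<close> F e1 e2 False k by simp
  qed
qed

lemma sum_yv:
  "(\<Sum>i<n. yv k b i (x i)) = (\<Sum>i<n. x i) + k * card {i. i < n \<and> b i (x i)}"
proof -
  have c: "(\<Sum>i<n. if b i (x i) then k else 0) = k * card {i. i < n \<and> b i (x i)}"
  proof -
    have "(\<Sum>i<n. if b i (x i) then k else 0) = (\<Sum>i\<in>{..<n} \<inter> {i. b i (x i)}. k)"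
      by (simp add: sum.If_cases)
    moreover have "{..<n} \<inter> {i. b i (x i)} = {i. i < n \<and> b i (x i)}" by auto
    ultimately show ?thesis by (simp add: mult.commute)
  qed
  show ?thesis unfolding yv_def by (simp add: sum.distrib c)
qed

lemma leaf_eq:
  assumes k: "k > 0" and S: "\<forall>i<n. S i \<subseteq> {..<k}"
  shows "(\<Sum>x\<in>Dr n k S. wv g n k (Leaf lam) x)
    = Wt k (\<lambda>i v. lam i v = Some True) g n (\<lambda>i. {v \<in> S i. lam i v \<noteq> None}) 0"
proof -
  define A where "A = (\<lambda>i. {v \<in> S i. lam i v \<noteq> None})"
  define b where "b = (\<lambda>i v. lam i v = Some True)"
  have finS: "finite (rect n S)" by (rule finite_rect) (use S in \<open>auto intro: finite_subset\<close>)
  have finA: "finite (rect n A)" by (rule finite_rect) (use S in \<open>auto intro: finite_subset simp: A_def\<close>)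
  have sub: "rect n A \<subseteq> rect n S" unfolding rect_def A_def by auto
  define h where "h x = (if (\<Sum>i<n. x i) mod k = 0 then wv g n k (Leaf lam) x else 0)" for x
  have "(\<Sum>x\<in>Dr n k S. wv g n k (Leaf lam) x) = (\<Sum>x\<in>rect n S. h x)"
    unfolding Dr_def h_def using finS by (simp add: sum.inter_filter)
  also have "\<dots> = (\<Sum>x\<in>rect n A. h x)"
  proof (rule sum.mono_neutral_right[OF finS sub])
    show "\<forall>x\<in>rect n S - rect n A. h x = 0"
    proof
      fix x assume x: "x \<in> rect n S - rect n A"
      then have "\<not> clicks n (Leaf lam) x" unfolding rect_def A_def clicks_def by auto
      then show "h x = 0" unfolding h_def wv_def by simp
    qed
  qed
  also have "\<dots> = (\<Sum>x\<in>rect n A. (if (0 + (\<Sum>i<n. yv k b i (x i))) mod (2*k) = 0 then 1 else 0)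
      - (1+g) * (if (k + (\<Sum>i<n. yv k b i (x i))) mod (2*k) = 0 then 1 else 0))"
  proof (rule sum.cong[OF refl])
    fix x assume x: "x \<in> rect n A"
    have cl: "clicks n (Leaf lam) x" using x unfolding rect_def A_def clicks_def by auto
    have gh: "(ghzP n k (\<lambda>i. run (Leaf lam) x i = Some True) x = 0)
        \<longleftrightarrow> \<not> (card {i. i < n \<and> b i (x i)} mod 2 = (((\<Sum>i<n. x i) mod (2*k)) div k) mod 2)"
      unfolding ghzP_def ghzF_def b_def by simp
    have w: "wv g n k (Leaf lam) x = (if card {i. i < n \<and> b i (x i)} mod 2 = (((\<Sum>i<n. x i) mod (2*k)) div k) mod 2 then 1 else - (1+g))"
      unfolding wv_def using cl gh by simp
    have "h x = (if (\<Sum>i<n. x i) mod k = 0 then (if card {i. i < n \<and> b i (x i)} mod 2 = (((\<Sum>i<n. x i) mod (2*k)) div k) mod 2 then 1 else - (1+g)) else 0)"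
      unfolding h_def w ..
    also have "\<dots> = (if (0 + ((\<Sum>i<n. x i) + k * card {i. i < n \<and> b i (x i)})) mod (2*k) = 0 then 1 else 0)
      - (1+g) * (if (k + ((\<Sum>i<n. x i) + k * card {i. i < n \<and> b i (x i)})) mod (2*k) = 0 then 1 else 0)"
      by (rule pt_arith[OF k])
    also have "\<dots> = (if (0 + (\<Sum>i<n. yv k b i (x i))) mod (2*k) = 0 then 1 else 0)
      - (1+g) * (if (k + (\<Sum>i<n. yv k b i (x i))) mod (2*k) = 0 then 1 else 0)"
      by (simp only: sum_yv)
    finally show "h x = (if (0 + (\<Sum>i<n. yv k b i (x i))) mod (2*k) = 0 then 1 else 0)
      - (1+g) * (if (k + (\<Sum>i<n. yv k b i (x i))) mod (2*k) = 0 then 1 else 0)" .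
  qed
  also have "\<dots> = Wt k b g n A 0"
    unfolding Wt_def cnt_def by (simp add: sum_subtractf sum_distrib_left)
  finally show ?thesis unfolding A_def b_def .
qed

lemma validD_Dr: "validD n k = Dr n k (\<lambda>_. {..<k})"
  unfolding validD_def Dr_def inputs_def rect_def by auto

lemma mod_fix: "(k::nat) > 0 \<Longrightarrow> (s + (k - s mod k) mod k) mod k = 0"
proof -
  assume k: "k > 0"
  show ?thesis
  proof (cases "s mod k = 0")
    case True then show ?thesis by simp
  next
    case False
    have h: "s mod k < k" using k by simp
    have h2: "(k - s mod k) mod k = k - s mod k" using False h by simp
    have s: "s = k * (s div k) + s mod k" by simp
    have r: "s mod k + (k - s mod k) = k" using h by simp
    have "s + (k - s mod k) = k * (s div k) + k" by (metis add.assoc s r)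
    then show ?thesis unfolding h2 by simp
  qed
qed

lemma card_validD:
  assumes k: "k \<ge> 1" and n: "n \<ge> 1"
  shows "real k ^ (n - 1) \<le> real (card (validD n k))"
proof -
  define m where "m = n - 1"
  have nm: "n = Suc m" using n m_def by simp
  define phi where "phi x = x(m := (k - (\<Sum>i<m. x i) mod k) mod k)" for x :: "nat \<Rightarrow> nat"
  have fin: "finite (validD n k)" unfolding validD_Dr by (rule finite_Dr) auto
  have inj: "inj_on phi (rect m (\<lambda>_. {..<k}))"
  proof (rule inj_onI)
    fix x y assume x: "x \<in> rect m (\<lambda>_. {..<k})" and y: "y \<in> rect m (\<lambda>_. {..<k})" and e: "phi x = phi y"
    show "x = y"
    proof
      fix i show "x i = y i"
      proof (cases "i = m")
        case True then show ?thesis using x y by (simp add: rect_def)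
      next
        case False then show ?thesis using fun_cong[OF e, of i] by (simp add: phi_def)
      qed
    qed
  qed
  have img: "phi ` rect m (\<lambda>_. {..<k}) \<subseteq> validD n k"
  proof
    fix z assume "z \<in> phi ` rect m (\<lambda>_. {..<k})"
    then obtain x where x: "x \<in> rect m (\<lambda>_. {..<k})" and z: "z = phi x" by blast
    have lt: "\<forall>i<n. z i < k"
    proof (intro allI impI)
      fix i assume "i < n"
      then show "z i < k" using x k unfolding z phi_def rect_def nm by (cases "i = m") auto
    qed
    have zero: "\<forall>i\<ge>n. z i = 0" using x unfolding z phi_def rect_def nm by auto
    have sm: "(\<Sum>i<m. z i) = (\<Sum>i<m. x i)" unfolding z phi_def by (intro sum.cong) auto
    have "(\<Sum>i<n. z i) = (\<Sum>i<m. x i) + (k - (\<Sum>i<m. x i) mod k) mod k"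
      unfolding nm sum.lessThan_Suc sm by (simp add: z phi_def)
    then have "(\<Sum>i<n. z i) mod k = 0" using mod_fix[of k "\<Sum>i<m. x i"] k by simp
    then show "z \<in> validD n k" using lt zero unfolding validD_def inputs_def by auto
  qed
  have "card (rect m (\<lambda>_. {..<k})) \<le> card (validD n k)" by (rule card_inj_on_le[OF inj img fin])
  moreover have "card (rect m (\<lambda>_. {..<k})) = k ^ m" by (subst card_rect) auto
  ultimately show ?thesis unfolding m_def by (metis of_nat_le_iff of_nat_power)
qed

lemma psi_le2:
  assumes "a \<le> k" "k > 0"
  shows "psi k a \<le> 2"
proof -
  have "2 * (a div 2) \<le> a" by simp
  then have "real (a div 2) * 2 \<le> real k" using assms(1) by linarith
  then have "real (a div 2) * 2 / real k \<le> 1" using assms(2) by simp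
  then have h1: "real (a div 2) * (2 / real k) \<le> 1" by simp
  have "a mod 2 \<le> 1" by simp
  then have h2: "real (a mod 2) \<le> 1" by linarith
  show ?thesis unfolding psi_def using h1 h2 by linarith
qed

lemma Bnd_le:
  assumes "k > 0" "\<forall>i<m. A i \<subseteq> {..<k}"
  shows "Bnd k P0 m A \<le> real k ^ P0 * 2 ^ m"
proof -
  have "(\<Prod>i<m. psi k (card (A i))) \<le> (\<Prod>i<m. 2)"
  proof (rule prod_mono)
    fix i assume i: "i \<in> {..<m}"
    have "card (A i) \<le> card {..<k}" using assms(2) i by (intro card_mono) auto
    then have "card (A i) \<le> k" by simp
    then show "0 \<le> psi k (card (A i)) \<and> psi k (card (A i)) \<le> 2"
      using psi_nonneg psi_le2 assms(1) by auto
  qed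
  then show ?thesis unfolding Bnd_def by (intro mult_left_mono) auto
qed

lemma small_ok:
  assumes kJ: "k = (2::nat)^J"
  shows "(2 + 1/real k) * cos (pi/(2*real k)) ^ (16*k^4) \<le> (1/real k)/(2*real k)"
proof -
  define K where "K = real k"
  have K1: "K \<ge> 1" unfolding K_def kJ by simp
  define c where "c = cos (pi/(2*real k))"
  have c0: "0 \<le> c" unfolding c_def using cos_c_01[of k] kJ by simp
  have cb: "c ^ (16*k^4) * (1 + real (16*k^4) / (2 * real k ^ 2)) \<le> 1"
    unfolding c_def by (rule cos_pow_bound[OF kJ]) simp
  have e: "real (16*k^4) / (2 * real k ^ 2) = 8 * K^2" unfolding K_def using K1 K_def
    by (simp add: field_simps power2_eq_square power4_eq_xxxx)
  have pos: "0 < 1 + 8 * K^2" by (simp add: add_pos_nonneg)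
  have cM: "c ^ (16*k^4) \<le> 1 / (1 + 8 * K^2)"
    using cb unfolding e by (simp add: pos_le_divide_eq[OF pos])
  have "(2 + 1/K) * c ^ (16*k^4) \<le> (2 + 1/K) * (1 / (1 + 8 * K^2))"
    using cM K1 by (intro mult_left_mono) auto
  also have "\<dots> \<le> (1/K)/(2*K)"
  proof -
    have "2 * K^2 * 1 \<le> 2 * K^2 * (2 * K)" using K1 by (intro mult_left_mono) auto
    then have q: "2 * K^2 \<le> 4 * K^3" by (simp add: power2_eq_square power3_eq_cube algebra_simps)
    have p: "4 * K^3 + 2 * K^2 \<le> K + 8 * K^3" using q K1 by linarith
    have "(2 + 1/K) * (1 / (1 + 8 * K^2)) = (2*K + 1) / (K * (1 + 8*K^2))" using K1 by (simp add: field_simps)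
    also have "\<dots> \<le> 1 / (2 * K^2)"
    proof -
      have pos1: "0 < K * (1 + 8*K^2)" using K1 by (simp add: add_pos_pos)
      have pos2: "0 < 2 * K^2" using K1 by simp
      have h: "(2*K + 1) * (2 * K^2) \<le> K * (1 + 8*K^2)" using p by (simp add: power2_eq_square power3_eq_cube algebra_simps)
      have f1: "2*K + 1 \<le> (K * (1 + 8*K^2)) / (2 * K^2)" using h by (simp add: pos_le_divide_eq[OF pos2])
      have f2: "2*K + 1 \<le> 1 / (2 * K^2) * (K * (1 + 8*K^2))" using f1 by simp
      show ?thesis by (subst pos_divide_le_eq[OF pos1]) (rule f2)
    qed
    also have "\<dots> = (1/K)/(2*K)" using K1 by (simp add: field_simps power2_eq_square)
    finally show ?thesis .
  qed
  finally show ?thesis unfolding K_def c_def .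
qed

lemma det_bound:
  assumes kJ: "k = 2^J" and J1: "J \<ge> 1" and wf: "wf_tree n k T" and bc: "bits T \<le> c"
  shows "(\<Sum>x\<in>validD n k. wv (1/real k) n k T x) \<le> 2^c * (real k ^ (J * (16*k^4)) * 2^n)"
proof -
  define K where "K = real k ^ (J * (16*k^4)) * 2^n"
  have kpos: "k > 0" using kJ by simp
  have K0: "K \<ge> 0" unfolding K_def by simp
  have M1: "16 * k^4 \<ge> 1" using kpos by simp
  have gpos: "1 / real k > 0" using kpos by simp
  have leaf: "(\<Sum>x\<in>Dr n k S. wv (1/real k) n k (Leaf lam) x) \<le> K" if S: "\<forall>i<n. S i \<subseteq> {..<k}" for lam S
  proof -
    have sub: "\<forall>i<n. {v \<in> S i. lam i v \<noteq> None} \<subseteq> {..<k}" using S by auto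
    have "(\<Sum>x\<in>Dr n k S. wv (1/real k) n k (Leaf lam) x)
        = Wt k (\<lambda>i v. lam i v = Some True) (1/real k) n (\<lambda>i. {v \<in> S i. lam i v \<noteq> None}) 0"
      by (rule leaf_eq[OF kpos S])
    also have "\<dots> \<le> Bnd k (J * (16*k^4)) n (\<lambda>i. {v \<in> S i. lam i v \<noteq> None})"
      by (rule main_bound[OF kJ J1 M1 gpos small_ok[OF kJ] refl sub])
    also have "\<dots> \<le> K" unfolding K_def by (rule Bnd_le[OF kpos sub])
    finally show ?thesis .
  qed
  have "(\<Sum>x\<in>Dr n k (\<lambda>_. {..<k}). wv (1/real k) n k T x) \<le> 2 ^ bits T * K"
    by (rule tree_bound[OF leaf K0 wf]) auto
  also have "\<dots> \<le> 2 ^ c * K" using bc K0 by (intro mult_right_mono) (auto intro: power_increasing)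
  finally show ?thesis unfolding validD_Dr K_def .
qed

lemma wv_ind:
  "wv g n k T x = indicator {T. clicks n T x} T - (2+g) * indicator {T. clicks n T x \<and> ghzP n k (\<lambda>i. run T x i = Some True) x = 0} T"
  unfolding wv_def by (auto simp: indicator_def)

lemma pmf_part:
  fixes M :: "ptree pmf" and D :: "(nat \<Rightarrow> nat) set" and g B :: real
  assumes fin: "finite D" and gpos: "g > 0" and bnd: "\<forall>T\<in>set_pmf M. (\<Sum>x\<in>D. wv g n k T x) \<le> B"
  shows "(\<Sum>x\<in>D. measure_pmf.prob M {T. clicks n T x})
     - (2+g) * (\<Sum>x\<in>D. measure_pmf.prob M {T. clicks n T x \<and> ghzP n k (\<lambda>i. run T x i = Some True) x = 0}) \<le> B"
proof -
  have intI: "integrable (measure_pmf M) (indicator A :: ptree \<Rightarrow> real)" for A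
    by (rule measure_pmf.integrable_const_bound[where B=1]) (auto simp: indicator_def)
  have intW: "integrable (measure_pmf M) (\<lambda>T. wv g n k T x)" for x
    unfolding wv_ind by (rule Bochner_Integration.integrable_diff[OF intI integrable_mult_right[OF intI]])
  have e: "measure_pmf.expectation M (\<lambda>T. wv g n k T x) = measure_pmf.prob M {T. clicks n T x} - (2+g) * measure_pmf.prob M {T. clicks n T x \<and> ghzP n k (\<lambda>i. run T x i = Some True) x = 0}"
    for x
  proof -
    have "measure_pmf.expectation M (\<lambda>T. wv g n k T x)
      = measure_pmf.expectation M (indicator {T. clicks n T x}) - measure_pmf.expectation M (\<lambda>T. (2+g) * indicator {T. clicks n T x \<and> ghzP n k (\<lambda>i. run T x i = Some True) x = 0} T)"
      unfolding wv_ind by (rule Bochner_Integration.integral_diff[OF intI integrable_mult_right[OF intI]])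
    also have "measure_pmf.expectation M (\<lambda>T. (2+g) * indicator {T. clicks n T x \<and> ghzP n k (\<lambda>i. run T x i = Some True) x = 0} T)
      = (2+g) * measure_pmf.expectation M (indicator {T. clicks n T x \<and> ghzP n k (\<lambda>i. run T x i = Some True) x = 0})"
      by (rule integral_mult_right_zero)
    finally show ?thesis by simp
  qed
  have "(\<Sum>x\<in>D. measure_pmf.prob M {T. clicks n T x})
     - (2+g) * (\<Sum>x\<in>D. measure_pmf.prob M {T. clicks n T x \<and> ghzP n k (\<lambda>i. run T x i = Some True) x = 0})
     = (\<Sum>x\<in>D. measure_pmf.prob M {T. clicks n T x} - (2+g) * measure_pmf.prob M {T. clicks n T x \<and> ghzP n k (\<lambda>i. run T x i = Some True) x = 0})"
    by (simp only: sum_subtractf sum_distrib_left)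
  also have "\<dots> = (\<Sum>x\<in>D. measure_pmf.expectation M (\<lambda>T. wv g n k T x))"
    by (rule sum.cong[OF refl]) (rule e[symmetric])
  also have "\<dots> = measure_pmf.expectation M (\<lambda>T. \<Sum>x\<in>D. wv g n k T x)"
    by (rule Bochner_Integration.integral_sum[symmetric]) (rule intW)
  also have "\<dots> \<le> B"
  proof (rule measure_pmf.integral_le_const)
    show "integrable (measure_pmf M) (\<lambda>T. \<Sum>x\<in>D. wv g n k T x)"
      by (rule Bochner_Integration.integrable_sum) (rule intW)
    show "AE T in measure_pmf M. (\<Sum>x\<in>D. wv g n k T x) \<le> B"
      by (rule AE_pmfI) (use bnd in auto)
  qed
  finally show ?thesis .
qed

lemma num_ineq: "J \<ge> 5 \<Longrightarrow> 17 * J^2 \<le> (4::nat)^J"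
proof (induction J rule: dec_induct)
  case base then show ?case by simp
next
  case (step J)
  have "17 * (Suc J)^2 \<le> 4 * (17 * J^2)"
  proof -
    have a: "5 * J \<le> J * J" using step(1) by (intro mult_right_mono) auto
    have b: "(Suc J)^2 = J*J + 2*J + 1" by (simp add: power2_eq_square algebra_simps)
    have c: "4 * J^2 = 4 * (J*J)" by (simp add: power2_eq_square)
    have "(Suc J)^2 \<le> 4 * J^2" unfolding b c using a step(1) by linarith
    then show ?thesis by simp
  qed
  also have "\<dots> \<le> 4 * 4^J" using step(3) by simp
  finally show ?case by simp
qed

lemma big_ineq:
  assumes J5: "J \<ge> 5"
  shows "J * (J * (16 * (2^J)^4) + 1) \<le> (2::nat)^(6*J)"
proof -
  have X: "((2::nat)^J)^4 = 2^(4*J)" by (simp add: power_mult[symmetric] mult.commute)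
  define X where "X = (2::nat)^(4*J)"
  have X0: "1 \<le> X" unfolding X_def by simp
  have X1: "1 \<le> J * X" using J5 X0 by (metis le_trans mult_le_mono nat_mult_1 one_le_numeral le_add1 numeral_eq_Suc Suc_leI zero_less_Suc)
  have "J * (J * (16 * ((2::nat)^J)^4) + 1) = J * (J * (16 * X) + 1)" unfolding X X_def ..
  also have "\<dots> \<le> J * (J * (16 * X) + J * X)" using X1 by simp
  also have "\<dots> = 17 * J^2 * X" by (simp add: power2_eq_square algebra_simps)
  also have "\<dots> \<le> 4^J * X" using num_ineq[OF J5] by simp
  also have "(4::nat)^J = 2^(2*J)" by (simp add: power_mult)
  also have "2^(2*J) * X = 2^(6*J)" unfolding X_def by (simp add: power_add[symmetric])
  finally show ?thesis .
qed

lemma final_bound: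
  fixes n k c :: nat and M :: "ptree pmf" and J :: nat
  assumes kJ: "k = 2^J" and n6: "n = k^6" and J5: "J \<ge> 5" and vm: "valid_model n k c M"
  shows "(1 / 2 powr (real c / real n)) * eta n k M * root n (1 - eps n k M * (2 + 1 / real k))
          \<le> 4 * (1 / real k)"
proof -
  define gg where "gg = 1 / real k"
  have kpos: "k > 0" using kJ by simp
  have kr: "real k \<ge> 1" using kpos by simp
  have nJ: "n = 2^(6*J)" unfolding n6 kJ by (simp add: power_mult[symmetric] mult.commute)
  have npos: "n > 0" using nJ by simp
  have J1: "J \<ge> 1" using J5 by simp
  have gpos: "gg > 0" unfolding gg_def using kpos by simp
  define D where "D = validD n k"
  have finD: "finite D" unfolding D_def validD_Dr by (rule finite_Dr) auto
  define d where "d = real (card D)"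
  have dk: "real k ^ (n - 1) \<le> d" unfolding d_def D_def by (rule card_validD) (use kpos npos in auto)
  have dpos: "d > 0" using dk kr by (metis less_le_trans one_le_power zero_less_one)
  define P0 where "P0 = J * (16 * k^4)"
  define K where "K = real k ^ P0 * 2^n"
  define PC where "PC x = measure_pmf.prob M {T. clicks n T x}" for x
  define PF where "PF x = measure_pmf.prob M {T. clicks n T x \<and> ghzP n k (\<lambda>i. run T x i = Some True) x = 0}" for x
  define sC where "sC = (\<Sum>x\<in>D. PC x)"
  define sF where "sF = (\<Sum>x\<in>D. PF x)"
  have tb: "\<forall>T\<in>set_pmf M. (\<Sum>x\<in>D. wv gg n k T x) \<le> 2^c * K"
  proof
    fix T assume "T \<in> set_pmf M"
    then have "wf_tree n k T" "bits T \<le> c" using vm unfolding valid_model_def by auto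
    then show "(\<Sum>x\<in>D. wv gg n k T x) \<le> 2^c * K"
      unfolding D_def gg_def K_def P0_def by (intro det_bound[OF kJ J1])
  qed
  have key: "sC - (2 + gg) * sF \<le> 2^c * K"
    unfolding sC_def sF_def PC_def PF_def by (rule pmf_part[OF finD gpos tb])
  define E where "E = sC / d"
  have sC0: "0 \<le> sC" unfolding sC_def PC_def by (intro sum_nonneg) auto
  have E0: "0 \<le> E" unfolding E_def using sC0 dpos by simp
  have eta: "eta n k M = root n E" unfolding eta_def E_def sC_def PC_def d_def D_def ..
  have etan: "eta n k M ^ n = E" unfolding eta using npos E0 by simp
  have eps: "eps n k M = (\<Sum>x\<in>D. PF x / E) / d" unfolding eps_def etan[symmetric] PF_def D_def d_def ..
  define X where "X = 1 - eps n k M * (2 + 1 / real k)"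
  have rhs0: "0 < 4 * (1 / real k)" using kpos by simp
  have c0: "0 < 1 / 2 powr (real c / real n)" by simp
  show ?thesis unfolding X_def[symmetric] eta
  proof (cases "E = 0 \<or> X \<le> 0")
    case True
    have "(1 / 2 powr (real c / real n)) * root n E * root n X \<le> 0"
    proof (cases "E = 0")
      case True then show ?thesis by simp
    next
      case False
      then have "X \<le> 0" using \<open>E = 0 \<or> X \<le> 0\<close> by simp
      then have "root n X \<le> 0" using npos by (simp add: real_root_le_0_iff)
      moreover have "0 \<le> (1 / 2 powr (real c / real n)) * root n E"
        using c0 real_root_ge_zero[OF E0, of n] by (intro mult_nonneg_nonneg) auto
      ultimately show ?thesis by (rule mult_nonneg_nonpos[rotated])
    qed
    then show "(1 / 2 powr (real c / real n)) * root n E * root n X \<le> 4 * (1 / real k)"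
      using rhs0 by linarith
  next
    case False
    then have Ep: "E > 0" and Xp: "X > 0" using E0 by auto
    have epsv: "eps n k M = sF / (E * d)" unfolding eps sF_def by (simp add: sum_divide_distrib[symmetric])
    have EX: "E * X = (sC - (2 + gg) * sF) / d"
      unfolding X_def epsv gg_def using dpos Ep unfolding E_def by (simp add: field_simps)
    obtain m where nm: "n = Suc m" using npos by (cases n) auto
    have nm1: "n - 1 = m" using nm by simp
    define L where "L = (1 / 2 powr (real c / real n)) * root n E * root n X"
    have L0: "0 \<le> L" unfolding L_def using c0 real_root_ge_zero[of E n] real_root_ge_zero[of X n] Ep Xp
      by (intro mult_nonneg_nonneg) auto
    have p2: "(2 powr (real c / real n)) ^ n = 2 ^ c"
    proof -
      have "(2 powr (real c / real n)) ^ n = 2 powr (real n * (real c / real n))" by (rule powr_power) simp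
      also have "real n * (real c / real n) = real c" using npos by simp
      also have "(2::real) powr real c = 2 ^ c" by (simp add: powr_realpow)
      finally show ?thesis .
    qed
    have Ln: "L ^ n = (E * X) / 2 ^ c"
      unfolding L_def power_mult_distrib using npos E0 Xp p2 by (simp add: power_divide)
    also have "\<dots> \<le> (2^c * K / d) / 2^c"
      unfolding EX using key dpos by (intro divide_right_mono) (auto simp: divide_right_mono)
    also have "\<dots> = K / d" by simp
    also have "\<dots> \<le> (4 * (1 / real k)) ^ n"
    proof -
      have big: "real k ^ (P0 + 1) \<le> 2 ^ n"
      proof -
        have "J * (P0 + 1) \<le> n" unfolding P0_def nJ kJ using big_ineq[OF J5] by (simp add: mult.assoc)
        then have "(2::nat) ^ (J * (P0 + 1)) \<le> 2 ^ n" by (rule power_increasing) simp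
        then have h: "real ((2::nat) ^ (J * (P0 + 1))) \<le> real ((2::nat) ^ n)" by (simp only: of_nat_le_iff)
        have e: "real k ^ (P0 + 1) = real ((2::nat) ^ (J * (P0 + 1)))" unfolding kJ by (simp only: power_mult of_nat_power)
        have e2: "real ((2::nat) ^ n) = 2 ^ n" by simp
        show ?thesis using h unfolding e e2 .
      qed
      have "K * real k = real k ^ (P0 + 1) * 2 ^ n" unfolding K_def by (simp add: power_add)
      also have "\<dots> \<le> 2 ^ n * 2 ^ n" using big by (intro mult_right_mono) auto
      also have "\<dots> = 4 ^ n" by (simp add: power_mult_distrib[symmetric])
      finally have Kk: "K * real k \<le> 4 ^ n" .
      have "(4 / real k) ^ n * d \<ge> (4 / real k) ^ n * real k ^ (n - 1)"
        using dk by (intro mult_left_mono) auto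
      moreover have "(4 / real k) ^ n * real k ^ (n - 1) = 4 ^ n / real k"
      proof -
        have "real k ^ n = real k * real k ^ (n - 1)" unfolding nm1 unfolding nm by simp
        then show ?thesis using kpos by (simp add: power_divide field_simps)
      qed
      ultimately have "4 ^ n / real k \<le> (4 / real k) ^ n * d" by simp
      moreover have "K \<le> 4 ^ n / real k" using Kk kpos by (simp add: field_simps)
      ultimately have "K \<le> (4 / real k) ^ n * d" by linarith
      then show ?thesis using dpos by (simp add: pos_divide_le_eq)
    qed
    finally have "L ^ n \<le> (4 * (1 / real k)) ^ n" .
    then have "L ^ Suc m \<le> (4 * (1 / real k)) ^ Suc m" unfolding nm .
    then have "L \<le> 4 * (1 / real k)"
      by (rule power_le_imp_le_base) (use rhs0 in linarith)
    then show "(1 / 2 powr (real c / real n)) * root n E * root n X \<le> 4 * (1 / real k)"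
      unfolding L_def .
  qed
qed

theorem theorem3:
  "\<exists>g :: nat \<Rightarrow> real. g \<in> O(\<lambda>n. real n powr (-1/6)) \<and>
     (\<exists>C N. \<forall>n k c M. n \<ge> 1 \<and> n \<ge> N \<and> n = k ^ 6 \<and> (\<exists>j::nat. k = 2 ^ j) \<and>
        valid_model n k c M \<longrightarrow>
        (1 / 2 powr (real c / real n)) * eta n k M * root n (1 - eps n k M * (2 + g n))
          \<le> C * real n powr (-1/6))"
proof -
  define g :: "nat \<Rightarrow> real" where "g = (\<lambda>n. real n powr (-1/6))"
  have gO: "g \<in> O(\<lambda>n. real n powr (-1/6))" unfolding g_def by simp
  have main: "\<forall>n k c M. n \<ge> 1 \<and> n \<ge> 2^30 \<and> n = k ^ 6 \<and> (\<exists>j::nat. k = 2 ^ j) \<and>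
        valid_model n k c M \<longrightarrow>
        (1 / 2 powr (real c / real n)) * eta n k M * root n (1 - eps n k M * (2 + g n))
          \<le> 4 * real n powr (-1/6)"
  proof (intro allI impI)
    fix n k c :: nat and M :: "ptree pmf"
    assume H: "n \<ge> 1 \<and> n \<ge> 2^30 \<and> n = k ^ 6 \<and> (\<exists>j::nat. k = 2 ^ j) \<and> valid_model n k c M"
    then obtain J where kJ: "k = 2^J" by blast
    have n6: "n = k^6" using H by blast
    have vm: "valid_model n k c M" using H by blast
    have n30: "(2::nat)^30 \<le> n" using H by blast
    have "(2::nat)^30 \<le> 2^(6*J)" using n30 unfolding n6 kJ by (simp add: power_mult[symmetric] mult.commute)
    then have "30 \<le> 6*J" by (rule power_le_imp_le_exp[rotated]) simp
    then have J5: "J \<ge> 5" by simp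
    have kpos: "real k > 0" using kJ by simp
    have rp: "real n powr (-1/6) = 1 / real k"
    proof -
      have "real n = real k ^ 6" unfolding n6 by simp
      also have "\<dots> = real k powr (real 6)" using kpos by (simp add: powr_realpow)
      finally have "real n powr (-1/6) = (real k powr (real 6)) powr (-1/6)" by simp
      also have "\<dots> = real k powr (real 6 * (-1/6))" by (rule powr_powr)
      also have "real 6 * (-1/6) = (-1::real)" by simp
      also have "real k powr (-1) = 1 / real k" using kpos by (simp add: powr_minus_divide)
      finally show ?thesis .
    qed
    have gn: "g n = 1 / real k" unfolding g_def rp ..
    show "(1 / 2 powr (real c / real n)) * eta n k M * root n (1 - eps n k M * (2 + g n))
          \<le> 4 * real n powr (-1/6)"
      unfolding gn rp by (rule final_bound[OF kJ n6 J5 vm])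
  qed
  show ?thesis
    by (rule exI[of _ g], rule conjI[OF gO], rule exI[of _ "4::real"], rule exI[of _ "2^30::nat"], rule main)
qed

end
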